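(* If $f\in H^2(\tilde\mu)$, then $P_{\tilde\mu}\overline{f}$ is a constant function (equal $\tilde\mu$-a.e. to $\overline{\langle f,1\rangle_{H^2(\tilde\mu)}}$).
   Context: Let $\Omega=\{z:\mathrm{Re}\,z\ge-\tfrac12\}$ and $\mu$ the probability measure on $\Omega$ given by $d\mu=\sum_{n=-1}^\infty \frac{|\Gamma(\frac n2+iy+1)|^2}{2\pi(n+1)!}\,dy\,d\delta_{n/2}(x)$. Let $\Psi(z)=\frac{z}{1-z}$, which maps $\overline{\mathbb{D}}\setminus\{1\}$ onto $\Omega$, and let $\tilde\mu$ be the measure on $\overline{\mathbb{D}}$ with $\tilde\mu(E)=\mu(\Psi(E\setminus\{1\}))$ (so $\tilde\mu(\{1\})=0$). $H^2(\tilde\mu)$ is the closed linear span of $\{a^{z/(1-z)}:0<a\le1\}$ in $L^2(\tilde\mu)$ (where $a^{w}=e^{w\ln a}$), and $P_{\tilde\mu}$ is the orthogonal projection of $L^2(\tilde\mu)$ onto $H^2(\tilde\mu)$. *)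

theory Defs
  imports "HOL-Analysis.Analysis"
begin

text \<open>Density of the line component with index n = k - 1 (k = n + 1 :: nat):
  |Gamma(n/2 + i y + 1)|^2 / (2 pi (n+1)!).\<close>
definition mu_weight :: "nat \<Rightarrow> real \<Rightarrow> real" where
  "mu_weight k y = (cmod (Gamma (Complex ((real k - 1) / 2 + 1) y)))\<^sup>2 / (2 * pi * fact k)"

text \<open>The measure mu on Omega: sum over n >= -1 of the weighted Lebesgue measure
  on the vertical line Re z = n/2 (encoded with k = n + 1).\<close>
definition mu :: "complex measure" where
  "mu = distr (density (count_space (UNIV :: nat set) \<Otimes>\<^sub>M lborel)
                 (\<lambda>(k, y). ennreal (mu_weight k y)))
              borel (\<lambda>(k, y). Complex ((real k - 1) / 2) y)"

definition Psi :: "complex \<Rightarrow> complex" where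
  "Psi z = z / (1 - z)"

text \<open>tilde mu: the pull-back of mu to the closed disc via Psi, i.e. the image of mu
  under the inverse map w \<mapsto> w/(1+w); it gives no mass to {1}.\<close>
definition mu_tilde :: "complex measure" where
  "mu_tilde = distr mu borel (\<lambda>w. w / (1 + w))"

definition gen_fun :: "real \<Rightarrow> complex \<Rightarrow> complex" where
  "gen_fun a z = exp (Psi z * complex_of_real (ln a))"

definition L2 :: "complex measure \<Rightarrow> (complex \<Rightarrow> complex) set" where
  "L2 M = {f. f \<in> borel_measurable M \<and> integrable M (\<lambda>z. (cmod (f z))\<^sup>2)}"

definition L2_inner :: "complex measure \<Rightarrow> (complex \<Rightarrow> complex) \<Rightarrow> (complex \<Rightarrow> complex) \<Rightarrow> complex" where
  "L2_inner M f g = (\<integral>z. f z * cnj (g z) \<partial>M)"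

definition gen_span :: "(complex \<Rightarrow> complex) set" where
  "gen_span = {g. \<exists>n (c :: nat \<Rightarrow> complex) (a :: nat \<Rightarrow> real).
                   (\<forall>i<n. 0 < a i \<and> a i \<le> 1) \<and>
                   g = (\<lambda>z. \<Sum>i<n. c i * gen_fun (a i) z)}"

text \<open>H^2(M): closure of the span in L^2(M) (as a set of representatives).\<close>
definition H2 :: "complex measure \<Rightarrow> (complex \<Rightarrow> complex) set" where
  "H2 M = {f. f \<in> L2 M \<and>
             (\<forall>e>0. \<exists>g\<in>gen_span. (\<integral>z. (cmod (f z - g z))\<^sup>2 \<partial>M) < e)}"

text \<open>p represents (a.e.) the orthogonal projection of g onto the closed subspace H.\<close>
definition is_orth_proj :: "complex measure \<Rightarrow> (complex \<Rightarrow> complex) set \<Rightarrow>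
    (complex \<Rightarrow> complex) \<Rightarrow> (complex \<Rightarrow> complex) \<Rightarrow> bool" where
  "is_orth_proj M H g p \<longleftrightarrow> g \<in> L2 M \<and> p \<in> H \<and>
     (\<forall>h\<in>H. L2_inner M (\<lambda>z. g z - p z) h = 0)"

end

theory Submission
  imports Defs "HOL-Probability.Probability"
begin


lemma gauss_integrable:
  fixes n :: real assumes "n > 0"
  shows "integrable lborel (\<lambda>y. exp (-(y/n)\<^sup>2/2))"
proof -
  have "integrable lborel (\<lambda>y. sqrt (2*pi*n\<^sup>2) * normal_density 0 n y)"
    by (rule integrable_mult_right, rule integrable_normal_density) (use assms in simp)
  moreover have "(\<lambda>y. sqrt (2*pi*n\<^sup>2) * normal_density 0 n y) = (\<lambda>y. exp (-(y/n)\<^sup>2/2))"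
  proof
    fix y
    have "sqrt (2*pi*n\<^sup>2) \<noteq> 0" using assms by simp
    then show "sqrt (2*pi*n\<^sup>2) * normal_density 0 n y = exp (-(y/n)\<^sup>2/2)"
      by (simp add: normal_density_def power_divide)
  qed
  ultimately show ?thesis by simp
qed

lemma gauss_ft:
  fixes n t :: real assumes n: "n > 0"
  shows "(\<integral>y. complex_of_real (exp (-(y/n)\<^sup>2/2)) * iexp (y * t) \<partial>lborel)
          = complex_of_real (n * sqrt (2*pi) * exp (-(n*t)\<^sup>2/2))"
proof -
  have "char std_normal_distribution (n*t) = complex_of_real (exp (-(n*t)\<^sup>2/2))"
    by (simp add: char_std_normal_distribution)
  also have "char std_normal_distribution (n*t) =
      (\<integral>x. std_normal_density x *\<^sub>R iexp (n*t*x) \<partial>lborel)"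
    unfolding char_def by (subst integral_density) auto
  also have "\<dots> = \<bar>1/n\<bar> *\<^sub>R (\<integral>y. std_normal_density (0 + 1/n*y) *\<^sub>R iexp (n*t*(0 + 1/n*y)) \<partial>lborel)"
    by (rule lborel_integral_real_affine) (use n in auto)
  also have "(\<lambda>y. std_normal_density (0 + 1/n*y) *\<^sub>R iexp (n*t*(0 + 1/n*y)))
      = (\<lambda>y. complex_of_real (1/sqrt (2*pi)) * (complex_of_real (exp (-(y/n)\<^sup>2/2)) * iexp (y * t)))"
    using n by (auto simp: std_normal_density_def scaleR_conv_of_real mult_ac)
  also have "(\<integral>y. complex_of_real (1/sqrt (2*pi)) * (complex_of_real (exp (-(y/n)\<^sup>2/2)) * iexp (y * t)) \<partial>lborel)
     = complex_of_real (1/sqrt (2*pi)) * (\<integral>y. complex_of_real (exp (-(y/n)\<^sup>2/2)) * iexp (y * t) \<partial>lborel)"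
    by (rule integral_mult_right_zero)
  finally have "complex_of_real (exp (-(n*t)\<^sup>2/2)) = complex_of_real (1/n) * (complex_of_real (1/sqrt (2*pi)) * (\<integral>y. complex_of_real (exp (-(y/n)\<^sup>2/2)) * iexp (y * t) \<partial>lborel))"
    using n by (simp add: scaleR_conv_of_real)
  then show ?thesis using n
    by (simp add: field_simps) 
qed

lemma fourier_aux:
  fixes r R :: "real \<Rightarrow> real" and n c :: real
  assumes n: "n > 0"
    and r_int: "integrable lborel r"
    and R_ft: "\<And>y. (\<integral>x. complex_of_real (r x) * iexp (y*x) \<partial>lborel) = complex_of_real (R y)"
  shows "(\<integral>y. complex_of_real (R y) * iexp (y*c) * complex_of_real (exp (-(y/n)\<^sup>2/2)) \<partial>lborel)
     = complex_of_real (2*pi * (\<integral>z. std_normal_density z * r (-c + z/n) \<partial>lborel))"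
proof -
  have r_meas[measurable]: "r \<in> borel_measurable borel" using r_int by auto
  define K where "K y = exp (-(y/n)\<^sup>2/2)" for y
  have K_int: "integrable lborel K" unfolding K_def using gauss_integrable[OF n] .
  have K_meas[measurable]: "K \<in> borel_measurable borel" unfolding K_def by measurable
  have K_pos: "K y \<ge> 0" for y unfolding K_def by simp
  define F where "F = (\<lambda>y x. complex_of_real (K y * r x) * iexp (y*(x+c)))"
  have F_meas: "case_prod F \<in> borel_measurable (lborel \<Otimes>\<^sub>M lborel)"
    unfolding F_def by measurable
  have normF: "norm (F y x) = K y * \<bar>r x\<bar>" for y x
    unfolding F_def using K_pos by (simp add: norm_mult abs_mult)
  have intx: "integrable lborel (\<lambda>x. F y x)" for y
  proof -
    have "integrable lborel (\<lambda>x. K y * r x)" using r_int by auto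
    moreover have "(\<lambda>x. F y x) \<in> borel_measurable lborel" unfolding F_def by measurable
    moreover have "AE x in lborel. norm (F y x) \<le> norm (K y * r x)"
      using K_pos by (auto simp: normF abs_mult)
    ultimately show ?thesis by (rule Bochner_Integration.integrable_bound)
  qed
  have F_int: "integrable (lborel \<Otimes>\<^sub>M lborel) (case_prod F)"
  proof (rule lborel_pair.Fubini_integrable[OF F_meas])
    have "(\<lambda>y. LBINT x. norm (case_prod F (y, x))) = (\<lambda>y. K y * (LBINT x. \<bar>r x\<bar>))"
      by (auto simp: normF)
    moreover have "integrable lborel (\<lambda>y. K y * (LBINT x. \<bar>r x\<bar>))"
      using K_int by auto
    ultimately show "integrable lborel (\<lambda>y. LBINT x. norm (case_prod F (y, x)))" by simp
    show "AE y in lborel. integrable lborel (\<lambda>x. case_prod F (y, x))"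
      using intx by auto
  qed
  have "(\<integral>x. (\<integral>y. F y x \<partial>lborel) \<partial>lborel) = (\<integral>y. (\<integral>x. F y x \<partial>lborel) \<partial>lborel)"
    using lborel_pair.Fubini_integral[OF F_int] by simp
  also have "(\<lambda>y. (\<integral>x. F y x \<partial>lborel)) = (\<lambda>y. complex_of_real (R y) * iexp (y*c) * complex_of_real (K y))"
  proof
    fix y
    have "(\<lambda>x. F y x) = (\<lambda>x. (complex_of_real (K y) * iexp (y*c)) * (complex_of_real (r x) * iexp (y*x)))"
      unfolding F_def by (auto simp: distrib_left exp_add mult_ac)
    then have "(\<integral>x. F y x \<partial>lborel) = (complex_of_real (K y) * iexp (y*c)) * (\<integral>x. complex_of_real (r x) * iexp (y*x) \<partial>lborel)"
      by (simp only: integral_mult_right_zero)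
    then have "(\<integral>x. F y x \<partial>lborel) = (complex_of_real (K y) * iexp (y*c)) * complex_of_real (R y)"
      by (simp only: R_ft)
    then show "(\<integral>x. F y x \<partial>lborel) = complex_of_real (R y) * iexp (y*c) * complex_of_real (K y)"
      by (simp add: mult_ac)
  qed
  also have "(\<lambda>x. (\<integral>y. F y x \<partial>lborel)) = (\<lambda>x. complex_of_real (r x * (n * sqrt (2*pi) * exp (-(n*(x+c))\<^sup>2/2))))"
  proof
    fix x
    have "(\<lambda>y. F y x) = (\<lambda>y. complex_of_real (r x) * (complex_of_real (exp (-(y/n)\<^sup>2/2)) * iexp (y * (x+c))))"
      unfolding F_def K_def by (auto simp: mult_ac)
    then have "(\<integral>y. F y x \<partial>lborel) = complex_of_real (r x) * (\<integral>y. complex_of_real (exp (-(y/n)\<^sup>2/2)) * iexp (y * (x+c)) \<partial>lborel)"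
      by (simp only: integral_mult_right_zero)
    also have "\<dots> = complex_of_real (r x) * complex_of_real (n * sqrt (2*pi) * exp (-(n*(x+c))\<^sup>2/2))"
      by (simp only: gauss_ft[OF n])
    finally show "(\<integral>y. F y x \<partial>lborel) = complex_of_real (r x * (n * sqrt (2*pi) * exp (-(n*(x+c))\<^sup>2/2)))"
      by simp
  qed
  also have "(\<integral>x. complex_of_real (r x * (n * sqrt (2*pi) * exp (-(n*(x+c))\<^sup>2/2))) \<partial>lborel)
     = complex_of_real (\<integral>x. r x * (n * sqrt (2*pi) * exp (-(n*(x+c))\<^sup>2/2)) \<partial>lborel)"
    by (rule integral_complex_of_real)
  also have "(\<integral>x. r x * (n * sqrt (2*pi) * exp (-(n*(x+c))\<^sup>2/2)) \<partial>lborel)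
      = \<bar>1/n\<bar> *\<^sub>R (\<integral>z. r (-c + 1/n*z) * (n * sqrt (2*pi) * exp (-(n*((-c + 1/n*z)+c))\<^sup>2/2)) \<partial>lborel)"
    by (rule lborel_integral_real_affine) (use n in auto)
  also have "(\<lambda>z. r (-c + 1/n*z) * (n * sqrt (2*pi) * exp (-(n*((-c + 1/n*z)+c))\<^sup>2/2)))
      = (\<lambda>z. n * (2*pi) * (std_normal_density z * r (-c + z/n)))"
    using n by (auto simp: std_normal_density_def field_simps real_sqrt_mult)
  also have "\<bar>1/n\<bar> *\<^sub>R (\<integral>z. n * (2*pi) * (std_normal_density z * r (-c + z/n)) \<partial>lborel)
      = 2*pi * (\<integral>z. std_normal_density z * r (-c + z/n) \<partial>lborel)"
    using n by simp
  finally show ?thesis unfolding K_def by simp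
qed

lemma fourier_inversion:
  fixes r R :: "real \<Rightarrow> real" and B c :: real
  assumes r_int: "integrable lborel r"
    and r_cont: "continuous_on UNIV r"
    and r_bdd: "\<And>x. \<bar>r x\<bar> \<le> B"
    and R_meas: "R \<in> borel_measurable borel"
    and R_nonneg: "\<And>y. R y \<ge> 0"
    and R_ft: "\<And>y. (\<integral>x. complex_of_real (r x) * iexp (y*x) \<partial>lborel) = complex_of_real (R y)"
  shows "integrable lborel R"
    and "(\<integral>y. complex_of_real (R y) * iexp (y*c) \<partial>lborel) = complex_of_real (2*pi*r(-c))"
proof -
  have r_meas[measurable]: "r \<in> borel_measurable borel" using r_int by auto
  have R_meas'[measurable]: "R \<in> borel_measurable borel" by (rule R_meas)
  define nn where "nn k = real (Suc k)" for k
  have nn_pos: "nn k > 0" for k unfolding nn_def by simp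
  define K where "K k y = exp (-(y/nn k)\<^sup>2/2)" for k y
  have K_meas[measurable]: "(\<lambda>y. K k y) \<in> borel_measurable borel" for k unfolding K_def by measurable
  have K_le1: "K k y \<le> 1" for k y unfolding K_def by simp
  have K_pos: "K k y \<ge> 0" for k y unfolding K_def by simp
  have K_lim: "(\<lambda>k. K k y) \<longlonglongrightarrow> 1" for y
  proof -
    have "(\<lambda>k. y / nn k) \<longlonglongrightarrow> y * 0" unfolding nn_def divide_inverse
      by (intro tendsto_intros LIMSEQ_inverse_real_of_nat)
    then have "(\<lambda>k. exp (-(y/nn k)\<^sup>2/2)) \<longlonglongrightarrow> exp (-(y*0)\<^sup>2/2)"
      by (intro tendsto_intros) auto
    then show ?thesis unfolding K_def by simp
  qed
  have K_inc: "incseq (\<lambda>k. K k y)" for y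
  proof (rule incseq_SucI)
    fix k
    have "(y/nn (Suc k))\<^sup>2 \<le> (y/nn k)\<^sup>2"
      unfolding nn_def power_divide
      by (intro divide_left_mono) (auto simp: power_mono)
    then show "K k y \<le> K (Suc k) y" unfolding K_def by simp
  qed
  have lim_reg: "(\<lambda>k. (\<integral>y. complex_of_real (R y) * iexp (y*c) * complex_of_real (K k y) \<partial>lborel))
      \<longlonglongrightarrow> complex_of_real (2*pi*r(-c))" for c
  proof -
    have "(\<lambda>k. (\<integral>z. std_normal_density z * r (-c + z/nn k) \<partial>lborel))
        \<longlonglongrightarrow> (\<integral>z. std_normal_density z * r (-c) \<partial>lborel)"
    proof (rule integral_dominated_convergence[where w="\<lambda>z. std_normal_density z * \<bar>B\<bar>"])
      show "(\<lambda>z. std_normal_density z * r (-c)) \<in> borel_measurable lborel" by measurable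
      show "(\<lambda>z. std_normal_density z * r (-c + z/nn k)) \<in> borel_measurable lborel" for k
        by measurable
      show "integrable lborel (\<lambda>z. std_normal_density z * \<bar>B\<bar>)" by auto
      show "AE z in lborel. (\<lambda>k. std_normal_density z * r (-c + z/nn k)) \<longlonglongrightarrow> std_normal_density z * r (-c)"
      proof (intro AE_I2 tendsto_intros)
        fix z
        have "(\<lambda>k. -c + z/nn k) \<longlonglongrightarrow> -c + z*0" unfolding nn_def divide_inverse
          by (intro tendsto_intros LIMSEQ_inverse_real_of_nat)
        moreover have "isCont r (-c)" using r_cont by (simp add: continuous_on_eq_continuous_at)
        ultimately show "(\<lambda>k. r (-c + z/nn k)) \<longlonglongrightarrow> r (-c)"
          using isCont_tendsto_compose by fastforce
      qed
      show "AE z in lborel. norm (std_normal_density z * r (-c + z/nn k)) \<le> std_normal_density z * \<bar>B\<bar>" for k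
        using r_bdd by (auto simp: abs_mult intro!: mult_left_mono order.trans[OF _ abs_ge_self])
    qed
    then have "(\<lambda>k. (\<integral>z. std_normal_density z * r (-c + z/nn k) \<partial>lborel)) \<longlonglongrightarrow> r (-c)"
      by simp
    then have "(\<lambda>k. complex_of_real (2*pi * (\<integral>z. std_normal_density z * r (-c + z/nn k) \<partial>lborel)))
         \<longlonglongrightarrow> complex_of_real (2*pi*r(-c))"
      by (intro tendsto_intros)
    moreover have "(\<integral>y. complex_of_real (R y) * iexp (y*c) * complex_of_real (K k y) \<partial>lborel)
        = complex_of_real (2*pi * (\<integral>z. std_normal_density z * r (-c + z/nn k) \<partial>lborel))" for k
      unfolding K_def by (rule fourier_aux[OF nn_pos r_int R_ft])
    ultimately show ?thesis by simp
  qed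
  have R_bdd: "R y \<le> (\<integral>x. \<bar>r x\<bar> \<partial>lborel)" for y
  proof -
    have "R y = norm (complex_of_real (R y))" using R_nonneg[of y] by simp
    also have "\<dots> = norm (\<integral>x. complex_of_real (r x) * iexp (y*x) \<partial>lborel)" by (simp only: R_ft)
    also have "\<dots> \<le> (\<integral>x. norm (complex_of_real (r x) * iexp (y*x)) \<partial>lborel)"
      by (rule integral_norm_bound)
    also have "\<dots> = (\<integral>x. \<bar>r x\<bar> \<partial>lborel)" by (simp add: norm_mult)
    finally show ?thesis .
  qed
  have RK_int: "integrable lborel (\<lambda>y. R y * K k y)" for k
  proof -
    have "integrable lborel (\<lambda>y. (\<integral>x. \<bar>r x\<bar> \<partial>lborel) * K k y)"
      unfolding K_def using gauss_integrable[OF nn_pos] by auto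
    moreover have "(\<lambda>y. R y * K k y) \<in> borel_measurable lborel" by measurable
    moreover have "AE y in lborel. norm (R y * K k y) \<le> norm ((\<integral>x. \<bar>r x\<bar> \<partial>lborel) * K k y)"
      using R_bdd R_nonneg K_pos by (auto intro!: mult_right_mono)
    ultimately show ?thesis by (rule Bochner_Integration.integrable_bound)
  qed
  show R_int: "integrable lborel R"
  proof -
    have "(\<lambda>k. \<integral>\<^sup>+y. ennreal (R y * K k y) \<partial>lborel) \<longlonglongrightarrow> (\<integral>\<^sup>+y. ennreal (R y) \<partial>lborel)"
    proof (rule nn_integral_LIMSEQ)
      show "incseq (\<lambda>k y. ennreal (R y * K k y))"
        using K_inc R_nonneg by (auto simp: incseq_def le_fun_def intro!: ennreal_leI mult_left_mono)
      show "(\<lambda>y. ennreal (R y * K k y)) \<in> borel_measurable lborel" for k by measurable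
      show "(\<lambda>k. ennreal (R y * K k y)) \<longlonglongrightarrow> ennreal (R y)" for y
        using K_lim[of y] by (auto intro!: tendsto_ennrealI tendsto_eq_intros)
    qed
    moreover have "(\<integral>\<^sup>+y. ennreal (R y * K k y) \<partial>lborel) = ennreal (\<integral>y. R y * K k y \<partial>lborel)" for k
      using RK_int R_nonneg K_pos by (intro nn_integral_eq_integral) auto
    ultimately have A: "(\<lambda>k. ennreal (\<integral>y. R y * K k y \<partial>lborel)) \<longlonglongrightarrow> (\<integral>\<^sup>+y. ennreal (R y) \<partial>lborel)"
      by simp
    have "(\<lambda>k. complex_of_real (\<integral>y. R y * K k y \<partial>lborel)) \<longlonglongrightarrow> complex_of_real (2*pi*r(-0))"
    proof -
      have "(\<integral>y. complex_of_real (R y) * iexp (y*0) * complex_of_real (K k y) \<partial>lborel) = complex_of_real (\<integral>y. R y * K k y \<partial>lborel)" for k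
        by (simp flip: integral_complex_of_real)
      with lim_reg[of 0] show ?thesis by simp
    qed
    then have "(\<lambda>k. Re (complex_of_real (\<integral>y. R y * K k y \<partial>lborel))) \<longlonglongrightarrow> Re (complex_of_real (2*pi*r(-0)))"
      by (rule tendsto_Re)
    then have "(\<lambda>k. (\<integral>y. R y * K k y \<partial>lborel)) \<longlonglongrightarrow> 2*pi*r 0" by simp
    then have "(\<lambda>k. ennreal (\<integral>y. R y * K k y \<partial>lborel)) \<longlonglongrightarrow> ennreal (2*pi*r 0)"
      by (rule tendsto_ennrealI)
    with A have "(\<integral>\<^sup>+y. ennreal (R y) \<partial>lborel) = ennreal (2*pi*r 0)"
      using LIMSEQ_unique by blast
    then show ?thesis using R_nonneg
      by (intro integrableI_nonneg) auto
  qed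
  have "(\<lambda>k. (\<integral>y. complex_of_real (R y) * iexp (y*c) * complex_of_real (K k y) \<partial>lborel))
      \<longlonglongrightarrow> (\<integral>y. complex_of_real (R y) * iexp (y*c) \<partial>lborel)"
  proof (rule integral_dominated_convergence[where w=R])
    show "(\<lambda>y. complex_of_real (R y) * iexp (y*c)) \<in> borel_measurable lborel" by measurable
    show "(\<lambda>y. complex_of_real (R y) * iexp (y*c) * complex_of_real (K k y)) \<in> borel_measurable lborel" for k
      by measurable
    show "integrable lborel R" by (rule R_int)
    show "AE y in lborel. (\<lambda>k. complex_of_real (R y) * iexp (y*c) * complex_of_real (K k y)) \<longlonglongrightarrow> complex_of_real (R y) * iexp (y*c)"
    proof (intro AE_I2)
      fix y
      have "(\<lambda>k. complex_of_real (R y) * iexp (y*c) * complex_of_real (K k y)) \<longlonglongrightarrow> complex_of_real (R y) * iexp (y*c) * complex_of_real 1"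
        by (intro tendsto_intros K_lim)
      then show "(\<lambda>k. complex_of_real (R y) * iexp (y*c) * complex_of_real (K k y)) \<longlonglongrightarrow> complex_of_real (R y) * iexp (y*c)"
        by simp
    qed
    show "AE y in lborel. norm (complex_of_real (R y) * iexp (y*c) * complex_of_real (K k y)) \<le> R y" for k
      using R_nonneg K_pos K_le1 by (auto simp: norm_mult intro!: mult_left_le)
  qed
  with lim_reg[of c] show "(\<integral>y. complex_of_real (R y) * iexp (y*c) \<partial>lborel) = complex_of_real (2*pi*r(-c))"
    using LIMSEQ_unique by blast
qed



lemma complex_integrable_ReIm:
  fixes f :: "'a \<Rightarrow> complex"
  assumes "integrable M (\<lambda>x. Re (f x))" "integrable M (\<lambda>x. Im (f x))"
  shows "integrable M f" "integral\<^sup>L M f = Complex (integral\<^sup>L M (\<lambda>x. Re (f x))) (integral\<^sup>L M (\<lambda>x. Im (f x)))"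
proof -
  have eq: "f = (\<lambda>x. complex_of_real (Re (f x)) + \<i> * complex_of_real (Im (f x)))"
    by (auto simp: complex_eq_iff)
  have i1: "integrable M (\<lambda>x. complex_of_real (Re (f x)))" using assms by simp
  have i2: "integrable M (\<lambda>x. \<i> * complex_of_real (Im (f x)))" using assms by simp
  show "integrable M f" by (subst eq) (rule Bochner_Integration.integrable_add[OF i1 i2])
  have "integral\<^sup>L M f = integral\<^sup>L M (\<lambda>x. complex_of_real (Re (f x))) + integral\<^sup>L M (\<lambda>x. \<i> * complex_of_real (Im (f x)))"
    by (subst eq) (rule Bochner_Integration.integral_add[OF i1 i2])
  then show "integral\<^sup>L M f = Complex (integral\<^sup>L M (\<lambda>x. Re (f x))) (integral\<^sup>L M (\<lambda>x. Im (f x)))"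
    by (simp add: complex_eq_iff)
qed

lemma exp_image_UNIV: "exp ` (UNIV::real set) = {0<..}"
proof
  show "exp ` (UNIV::real set) \<subseteq> {0<..}" by auto
  show "{0<..} \<subseteq> exp ` (UNIV::real set)"
  proof
    fix x :: real assume "x \<in> {0<..}"
    then have "x = exp (ln x)" by simp
    then show "x \<in> exp ` UNIV" by blast
  qed
qed

lemma abs_int_UNIV_lborel:
  fixes g :: "real \<Rightarrow> real"
  assumes "g absolutely_integrable_on UNIV" "g \<in> borel_measurable borel"
  shows "integrable lborel g" "integral\<^sup>L lborel g = integral UNIV g"
proof -
  have "integrable lebesgue g" using assms(1) unfolding set_integrable_def by simp
  moreover have m: "g \<in> borel_measurable lborel" using assms(2) by simp
  ultimately show i: "integrable lborel g" using integrable_completion[OF m] by simp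
  show "integral\<^sup>L lborel g = integral UNIV g" using integral_lborel[OF i] by simp
qed

lemma gamma_exp_integral:
  fixes s :: complex assumes s: "Re s > 0"
  shows "integrable lborel (\<lambda>v. exp (s * complex_of_real v) / complex_of_real (exp (exp v)))"
    and "(\<integral>v. exp (s * complex_of_real v) / complex_of_real (exp (exp v)) \<partial>lborel) = Gamma s"
proof -
  define f where "f t = complex_of_real t powr (s - 1) / complex_of_real (exp t)" for t
  define h where "h v = exp (s * complex_of_real v) / complex_of_real (exp (exp v))" for v
  have fabs: "f absolutely_integrable_on {0<..}"
    unfolding f_def by (rule absolutely_integrable_Gamma_integral'[OF s])
  have fint: "(f has_integral Gamma s) {0<..}"
    unfolding f_def by (rule Gamma_integral_complex'[OF s])
  have h_eq: "h v = complex_of_real (exp v) * f (exp v)" for v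
  proof -
    have "complex_of_real (exp v) powr (s - 1) = exp ((s - 1) * complex_of_real v)"
      by (simp add: powr_def Ln_of_real)
    moreover have "complex_of_real (exp v) = exp (complex_of_real v)" by (simp add: exp_of_real)
    ultimately have "complex_of_real (exp v) * complex_of_real (exp v) powr (s - 1) = exp (s * complex_of_real v)"
      by (simp add: mult_exp_exp algebra_simps)
    then show ?thesis unfolding h_def f_def by simp
  qed
  have h_meas: "h \<in> borel_measurable borel" unfolding h_def by measurable
  have der: "\<And>x. x \<in> UNIV \<Longrightarrow> (exp has_field_derivative exp x) (at x within UNIV)"
    by (auto intro: DERIV_exp)
  have inj: "inj_on exp (UNIV::real set)" by (auto intro: inj_onI)
  have partRe: "(\<lambda>v. Re (h v)) absolutely_integrable_on UNIV \<and> integral UNIV (\<lambda>v. Re (h v)) = Re (Gamma s)"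
  proof -
    have a: "(\<lambda>t. Re (f t)) absolutely_integrable_on {0<..}"
      using absolutely_integrable_linear[OF fabs bounded_linear_Re] by (simp add: o_def)
    have b: "integral {0<..} (\<lambda>t. Re (f t)) = Re (Gamma s)"
      using has_integral_Re[OF fint] by (rule integral_unique)
    have "(\<lambda>x. \<bar>exp x\<bar> * Re (f (exp x))) absolutely_integrable_on UNIV \<and>
           integral UNIV (\<lambda>x. \<bar>exp x\<bar> * Re (f (exp x))) = Re (Gamma s)"
      using has_absolute_integral_change_of_variables_1'[of UNIV exp exp "\<lambda>t. Re (f t)" "Re (Gamma s)", OF _ der inj]
        a b by (simp add: exp_image_UNIV)
    moreover have "(\<lambda>x. \<bar>exp x\<bar> * Re (f (exp x))) = (\<lambda>v. Re (h v))"
      by (auto simp: h_eq)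
    ultimately show ?thesis by simp
  qed
  have partIm: "(\<lambda>v. Im (h v)) absolutely_integrable_on UNIV \<and> integral UNIV (\<lambda>v. Im (h v)) = Im (Gamma s)"
  proof -
    have a: "(\<lambda>t. Im (f t)) absolutely_integrable_on {0<..}"
      using absolutely_integrable_linear[OF fabs bounded_linear_Im] by (simp add: o_def)
    have b: "integral {0<..} (\<lambda>t. Im (f t)) = Im (Gamma s)"
      using has_integral_Im[OF fint] by (rule integral_unique)
    have "(\<lambda>x. \<bar>exp x\<bar> * Im (f (exp x))) absolutely_integrable_on UNIV \<and>
           integral UNIV (\<lambda>x. \<bar>exp x\<bar> * Im (f (exp x))) = Im (Gamma s)"
      using has_absolute_integral_change_of_variables_1'[of UNIV exp exp "\<lambda>t. Im (f t)" "Im (Gamma s)", OF _ der inj]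
        a b by (simp add: exp_image_UNIV)
    moreover have "(\<lambda>x. \<bar>exp x\<bar> * Im (f (exp x))) = (\<lambda>v. Im (h v))"
      by (auto simp: h_eq)
    ultimately show ?thesis by simp
  qed
  have mRe: "(\<lambda>v. Re (h v)) \<in> borel_measurable borel" using h_meas by measurable
  have mIm: "(\<lambda>v. Im (h v)) \<in> borel_measurable borel" using h_meas by measurable
  have iRe: "integrable lborel (\<lambda>v. Re (h v))" and eRe: "integral\<^sup>L lborel (\<lambda>v. Re (h v)) = Re (Gamma s)"
    using abs_int_UNIV_lborel[OF conjunct1[OF partRe] mRe] partRe by auto
  have iIm: "integrable lborel (\<lambda>v. Im (h v))" and eIm: "integral\<^sup>L lborel (\<lambda>v. Im (h v)) = Im (Gamma s)"
    using abs_int_UNIV_lborel[OF conjunct1[OF partIm] mIm] partIm by auto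
  show "integrable lborel (\<lambda>v. exp (s * complex_of_real v) / complex_of_real (exp (exp v)))"
    using complex_integrable_ReIm(1)[OF iRe iIm] unfolding h_def .
  show "(\<integral>v. exp (s * complex_of_real v) / complex_of_real (exp (exp v)) \<partial>lborel) = Gamma s"
    using complex_integrable_ReIm(2)[OF iRe iIm] eRe eIm unfolding h_def by (simp add: complex_eq_iff)
qed



definition gg :: "real \<Rightarrow> real \<Rightarrow> real" where
  "gg \<sigma> u = exp (\<sigma> * u - exp u)"

lemma gg_meas[measurable]: "gg \<sigma> \<in> borel_measurable borel"
  unfolding gg_def by measurable

lemma gg_pos: "gg \<sigma> u > 0" unfolding gg_def by simp

lemma gamma_real_exp_integral:
  fixes \<sigma> :: real assumes "\<sigma> > 0"
  shows "integrable lborel (\<lambda>v. exp (\<sigma> * v - exp v))"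
    and "(\<integral>v. exp (\<sigma> * v - exp v) \<partial>lborel) = Gamma \<sigma>"
proof -
  have eq: "(\<lambda>v. exp (complex_of_real \<sigma> * complex_of_real v) / complex_of_real (exp (exp v)))
      = (\<lambda>v. complex_of_real (exp (\<sigma> * v - exp v)))"
    by (auto simp: exp_of_real[symmetric] exp_diff)
  have "Re (complex_of_real \<sigma>) > 0" using assms by simp
  note G = gamma_exp_integral[OF this, unfolded eq]
  show "integrable lborel (\<lambda>v. exp (\<sigma> * v - exp v))"
    using G(1) by (simp only: complex_of_real_integrable_eq)
  have "complex_of_real (\<integral>v. exp (\<sigma> * v - exp v) \<partial>lborel) = complex_of_real (Gamma \<sigma>)"
    using G(2) by (simp add: Gamma_complex_of_real)
  then show "(\<integral>v. exp (\<sigma> * v - exp v) \<partial>lborel) = Gamma \<sigma>" by simp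
qed

lemma gg_integrable: "\<sigma> > 0 \<Longrightarrow> integrable lborel (gg \<sigma>)"
  unfolding gg_def[abs_def] by (rule gamma_real_exp_integral(1))

lemma gamma_scaled:
  fixes \<sigma> K :: real assumes "\<sigma> > 0" "K > 0"
  shows "integrable lborel (\<lambda>v. exp (\<sigma> * v - K * exp v))"
    and "(\<integral>v. exp (\<sigma> * v - K * exp v) \<partial>lborel) = Gamma \<sigma> * K powr (-\<sigma>)"
proof -
  define F where "F v = exp (\<sigma> * v - exp v)" for v
  have FI: "integrable lborel F" unfolding F_def[abs_def] by (rule gamma_real_exp_integral(1)[OF assms(1)])
  have eq: "(\<lambda>v. exp (\<sigma> * v - K * exp v)) = (\<lambda>v. K powr (-\<sigma>) * F (ln K + 1 * v))"
  proof
    fix v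
    have "K powr (-\<sigma>) * F (ln K + 1 * v) = exp (-\<sigma> * ln K) * exp (\<sigma> * (ln K + v) - exp (ln K + v))"
      using assms by (simp add: F_def powr_def)
    also have "\<dots> = exp (\<sigma> * v - K * exp v)"
      using assms by (simp add: exp_add mult_exp_exp algebra_simps)
    finally show "exp (\<sigma> * v - K * exp v) = K powr (-\<sigma>) * F (ln K + 1 * v)" ..
  qed
  show "integrable lborel (\<lambda>v. exp (\<sigma> * v - K * exp v))"
    unfolding eq using lborel_integrable_real_affine[OF FI, of 1 "ln K"] by simp
  have "(\<integral>v. F v \<partial>lborel) = \<bar>1\<bar> *\<^sub>R (\<integral>v. F (ln K + 1 * v) \<partial>lborel)"
    by (rule lborel_integral_real_affine) simp
  then have "(\<integral>v. F (ln K + 1 * v) \<partial>lborel) = Gamma \<sigma>"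
    using gamma_real_exp_integral(2)[OF assms(1)] unfolding F_def by simp
  then show "(\<integral>v. exp (\<sigma> * v - K * exp v) \<partial>lborel) = Gamma \<sigma> * K powr (-\<sigma>)"
    unfolding eq using assms by simp
qed

definition rr :: "real \<Rightarrow> real \<Rightarrow> real" where
  "rr \<sigma> x = Gamma (2*\<sigma>) * exp (\<sigma> * x) * (1 + exp x) powr (-(2*\<sigma>))"

lemma gg_conv:
  fixes \<sigma> x :: real assumes "\<sigma> > 0"
  shows "integrable lborel (\<lambda>v. gg \<sigma> (x + v) * gg \<sigma> v)"
    and "(\<integral>v. gg \<sigma> (x + v) * gg \<sigma> v \<partial>lborel) = rr \<sigma> x"
proof -
  have eq: "(\<lambda>v. gg \<sigma> (x + v) * gg \<sigma> v) = (\<lambda>v. exp (\<sigma> * x) * exp ((2*\<sigma>) * v - (1 + exp x) * exp v))"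
  proof
    fix v
    have "gg \<sigma> (x + v) * gg \<sigma> v = exp (\<sigma> * (x+v) - exp (x+v) + (\<sigma> * v - exp v))"
      unfolding gg_def by (simp only: mult_exp_exp)
    also have "\<sigma> * (x+v) - exp (x+v) + (\<sigma> * v - exp v) = \<sigma> * x + ((2*\<sigma>) * v - (1 + exp x) * exp v)"
      by (simp add: exp_add algebra_simps)
    also have "exp (\<sigma> * x + ((2*\<sigma>) * v - (1 + exp x) * exp v)) = exp (\<sigma> * x) * exp ((2*\<sigma>) * v - (1 + exp x) * exp v)"
      by (simp only: exp_add)
    finally show "gg \<sigma> (x + v) * gg \<sigma> v = exp (\<sigma> * x) * exp ((2*\<sigma>) * v - (1 + exp x) * exp v)" .
  qed
  have p: "2*\<sigma> > 0" "1 + exp x > 0" using assms by (auto intro: add_pos_pos)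
  show "integrable lborel (\<lambda>v. gg \<sigma> (x + v) * gg \<sigma> v)"
    unfolding eq using gamma_scaled(1)[OF p] by simp
  show "(\<integral>v. gg \<sigma> (x + v) * gg \<sigma> v \<partial>lborel) = rr \<sigma> x"
    unfolding eq rr_def using gamma_scaled(2)[OF p] by simp
qed

lemma gg_ft:
  fixes \<sigma> y :: real assumes "\<sigma> > 0"
  shows "integrable lborel (\<lambda>u. complex_of_real (gg \<sigma> u) * iexp (y * u))"
    and "(\<integral>u. complex_of_real (gg \<sigma> u) * iexp (y * u) \<partial>lborel) = Gamma (Complex \<sigma> y)"
proof -
  have eq: "(\<lambda>v. exp (Complex \<sigma> y * complex_of_real v) / complex_of_real (exp (exp v)))
      = (\<lambda>u. complex_of_real (gg \<sigma> u) * iexp (y * u))"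
  proof
    fix v
    have "Complex \<sigma> y * complex_of_real v = complex_of_real (\<sigma> * v) + \<i> * complex_of_real (y * v)"
      by (simp add: complex_eq_iff)
    then have "exp (Complex \<sigma> y * complex_of_real v) = complex_of_real (exp (\<sigma> * v)) * iexp (y * v)"
      by (simp only: exp_add exp_of_real)
    moreover have "complex_of_real (gg \<sigma> v) = complex_of_real (exp (\<sigma> * v)) / complex_of_real (exp (exp v))"
      by (simp add: gg_def exp_diff)
    ultimately show "exp (Complex \<sigma> y * complex_of_real v) / complex_of_real (exp (exp v))
      = complex_of_real (gg \<sigma> v) * iexp (y * v)"
      by simp
  qed
  have "Re (Complex \<sigma> y) > 0" using assms by simp
  note G = gamma_exp_integral[OF this, unfolded eq]
  show "integrable lborel (\<lambda>u. complex_of_real (gg \<sigma> u) * iexp (y * u))" by (rule G(1))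
  show "(\<integral>u. complex_of_real (gg \<sigma> u) * iexp (y * u) \<partial>lborel) = Gamma (Complex \<sigma> y)" by (rule G(2))
qed



lemma gamma_line_meas:
  "(\<lambda>y. Gamma (Complex \<sigma> y)) \<in> borel_measurable borel"
proof -
  have "continuous_on UNIV (\<lambda>y. rGamma (Complex \<sigma> y))"
    by (intro continuous_intros continuous_on_rGamma[THEN continuous_on_compose2]) (auto intro!: continuous_intros simp: Complex_eq)
  then have "(\<lambda>y. rGamma (Complex \<sigma> y)) \<in> borel_measurable borel"
    by (rule borel_measurable_continuous_onI)
  then have "(\<lambda>y. inverse (rGamma (Complex \<sigma> y))) \<in> borel_measurable borel"
    by measurable
  then show ?thesis by (simp add: rGamma_inverse_Gamma)
qed

lemma autocorr:
  fixes \<sigma> y :: real assumes s: "\<sigma> > 0"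
  shows "Gamma (Complex \<sigma> y) * cnj (Gamma (Complex \<sigma> y)) = (\<integral>x. complex_of_real (rr \<sigma> x) * iexp (y * x) \<partial>lborel)"
    and "integrable lborel (rr \<sigma>)"
proof -
  have gI: "integrable lborel (gg \<sigma>)" by (rule gg_integrable[OF s])
  have transl: "integrable lborel (\<lambda>x. gg \<sigma> (x + v))" for v
    using lborel_integrable_real_affine[OF gI, of 1 v] by (simp add: add.commute)
  have transl_int: "(\<integral>x. gg \<sigma> (x + v) \<partial>lborel) = (\<integral>x. gg \<sigma> x \<partial>lborel)" for v
    using lborel_integral_real_affine[of 1 "gg \<sigma>" v] by (simp add: add.commute)
  define H where "H = (\<lambda>v x. complex_of_real (gg \<sigma> (x + v) * gg \<sigma> v) * iexp (y * x))"
  define P where "P = (\<lambda>v x. gg \<sigma> (x + v) * gg \<sigma> v)"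
  have H_meas: "case_prod H \<in> borel_measurable (lborel \<Otimes>\<^sub>M lborel)" unfolding H_def by measurable
  have P_meas: "case_prod P \<in> borel_measurable (lborel \<Otimes>\<^sub>M lborel)" unfolding P_def by measurable
  have normH: "norm (H v x) = P v x" for v x
    unfolding H_def P_def using gg_pos[of \<sigma>] by (simp add: norm_mult less_imp_le)
  have P_nonneg: "P v x \<ge> 0" for v x unfolding P_def using gg_pos[of \<sigma>] by (simp add: less_imp_le)
  have Px_int: "integrable lborel (\<lambda>x. P v x)" for v
    unfolding P_def using transl[of v] by simp
  have Hx_int: "integrable lborel (\<lambda>x. H v x)" for v
  proof -
    have "(\<lambda>x. H v x) \<in> borel_measurable lborel" unfolding H_def by measurable
    moreover have "AE x in lborel. norm (H v x) \<le> norm (P v x)" by (simp add: normH)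
    ultimately show ?thesis using Px_int[of v] Bochner_Integration.integrable_bound by blast
  qed
  have Pint_eq: "(\<integral>x. P v x \<partial>lborel) = gg \<sigma> v * (\<integral>x. gg \<sigma> x \<partial>lborel)" for v
    unfolding P_def using transl_int[of v] by simp
  have outer_int: "integrable lborel (\<lambda>v. gg \<sigma> v * (\<integral>x. gg \<sigma> x \<partial>lborel))"
    using gI by simp
  have H_int: "integrable (lborel \<Otimes>\<^sub>M lborel) (case_prod H)"
  proof (rule lborel_pair.Fubini_integrable[OF H_meas])
    show "integrable lborel (\<lambda>v. LBINT x. norm (case_prod H (v, x)))"
      using outer_int by (simp add: normH Pint_eq)
    show "AE v in lborel. integrable lborel (\<lambda>x. case_prod H (v, x))"
      using Hx_int by simp
  qed
  have P_int: "integrable (lborel \<Otimes>\<^sub>M lborel) (case_prod P)"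
  proof (rule lborel_pair.Fubini_integrable[OF P_meas])
    show "integrable lborel (\<lambda>v. LBINT x. norm (case_prod P (v, x)))"
      using outer_int P_nonneg by (simp add: Pint_eq)
    show "AE v in lborel. integrable lborel (\<lambda>x. case_prod P (v, x))"
      using Px_int by simp
  qed
  have "integrable lborel (\<lambda>x. LBINT v. P v x)"
    using lborel_pair.integrable_snd[OF P_int] .
  moreover have "(\<lambda>x. LBINT v. P v x) = rr \<sigma>"
    using gg_conv(2)[OF s] unfolding P_def by auto
  ultimately show "integrable lborel (rr \<sigma>)" by simp
  define G where "G = Gamma (Complex \<sigma> y)"
  have G_eq: "G = (\<integral>u. complex_of_real (gg \<sigma> u) * iexp (y * u) \<partial>lborel)"
    unfolding G_def by (rule gg_ft(2)[OF s, symmetric])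
  have cnjG: "cnj G = (\<integral>v. complex_of_real (gg \<sigma> v) * iexp (-(y * v)) \<partial>lborel)"
  proof -
    have "cnj G = (\<integral>u. cnj (complex_of_real (gg \<sigma> u) * iexp (y * u)) \<partial>lborel)"
      unfolding G_eq by (rule Bochner_Integration.integral_cnj[symmetric])
    also have "(\<lambda>u. cnj (complex_of_real (gg \<sigma> u) * iexp (y * u))) = (\<lambda>v. complex_of_real (gg \<sigma> v) * iexp (-(y * v)))"
      by (rule ext) (simp add: exp_cnj)
    finally show ?thesis .
  qed
  have inner: "complex_of_real (gg \<sigma> v) * iexp (-(y * v)) * G = (\<integral>x. H v x \<partial>lborel)" for v
  proof -
    have "G = (\<integral>x. complex_of_real (gg \<sigma> (v + 1 * x)) * iexp (y * (v + 1 * x)) \<partial>lborel)"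
      unfolding G_eq using lborel_integral_real_affine[of 1 "\<lambda>u. complex_of_real (gg \<sigma> u) * iexp (y * u)" v]
      by simp
    then have "complex_of_real (gg \<sigma> v) * iexp (-(y * v)) * G =
       (\<integral>x. complex_of_real (gg \<sigma> v) * iexp (-(y * v)) * (complex_of_real (gg \<sigma> (v + 1 * x)) * iexp (y * (v + 1 * x))) \<partial>lborel)"
      by (simp only: integral_mult_right_zero)
    also have "(\<lambda>x. complex_of_real (gg \<sigma> v) * iexp (-(y * v)) * (complex_of_real (gg \<sigma> (v + 1 * x)) * iexp (y * (v + 1 * x))))
        = (\<lambda>x. H v x)"
    proof
      fix x
      have "iexp (-(y * v)) * iexp (y * (v + 1 * x)) = iexp (y * x)"
        by (simp add: exp_add[symmetric] algebra_simps)
      then show "complex_of_real (gg \<sigma> v) * iexp (-(y * v)) * (complex_of_real (gg \<sigma> (v + 1 * x)) * iexp (y * (v + 1 * x))) = H v x"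
        unfolding H_def by (simp add: add.commute mult_ac)
    qed
    finally show ?thesis .
  qed
  have "G * cnj G = cnj G * G" by simp
  also have "\<dots> = (\<integral>v. complex_of_real (gg \<sigma> v) * iexp (-(y * v)) * G \<partial>lborel)"
    unfolding cnjG by (simp only: integral_mult_left_zero)
  also have "\<dots> = (\<integral>v. (\<integral>x. H v x \<partial>lborel) \<partial>lborel)" by (simp only: inner)
  also have "\<dots> = (\<integral>x. (\<integral>v. H v x \<partial>lborel) \<partial>lborel)"
    using lborel_pair.Fubini_integral[OF H_int] by simp
  also have "(\<lambda>x. (\<integral>v. H v x \<partial>lborel)) = (\<lambda>x. complex_of_real (rr \<sigma> x) * iexp (y * x))"
  proof
    fix x
    have "(\<integral>v. H v x \<partial>lborel) = (\<integral>v. complex_of_real (P v x) * iexp (y * x) \<partial>lborel)"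
      unfolding H_def P_def ..
    also have "\<dots> = complex_of_real (\<integral>v. P v x \<partial>lborel) * iexp (y * x)"
      by (simp only: integral_mult_left_zero integral_complex_of_real)
    also have "(\<integral>v. P v x \<partial>lborel) = rr \<sigma> x" unfolding P_def by (rule gg_conv(2)[OF s])
    finally show "(\<integral>v. H v x \<partial>lborel) = complex_of_real (rr \<sigma> x) * iexp (y * x)" .
  qed
  finally show "Gamma (Complex \<sigma> y) * cnj (Gamma (Complex \<sigma> y)) = (\<integral>x. complex_of_real (rr \<sigma> x) * iexp (y * x) \<partial>lborel)"
    unfolding G_def .
qed

lemma rr_bound:
  fixes \<sigma> x :: real assumes s: "\<sigma> > 0"
  shows "\<bar>rr \<sigma> x\<bar> \<le> Gamma (2*\<sigma>)"
proof -
  have e: "exp x \<le> (1 + exp x)^2" by (simp add: power2_eq_square algebra_simps add_pos_pos)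
  have a: "exp (\<sigma> * x) = exp x powr \<sigma>" by (simp add: powr_def mult.commute)
  have b: "(1 + exp x) powr (2*\<sigma>) = ((1 + exp x) powr 2) powr \<sigma>"
    by (simp only: powr_powr)
  have c: "(1 + exp x) powr 2 = (1 + exp x)^2"
    by (subst powr_realpow[symmetric]) (auto intro: add_pos_pos)
  have "exp (\<sigma> * x) \<le> (1 + exp x) powr (2*\<sigma>)"
    unfolding a b c using s e by (intro powr_mono2) auto
  moreover have ne: "1 + exp x \<noteq> 0" using exp_gt_zero[of x] by linarith
  moreover have pos: "(1 + exp x) powr (2*\<sigma>) > 0" using ne by simp
  ultimately have "exp (\<sigma> * x) * (1 + exp x) powr (-(2*\<sigma>)) \<le> 1"
    by (simp add: powr_minus divide_inverse[symmetric] pos_divide_le_eq)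
  moreover have "Gamma (2*\<sigma>) > 0" using s by (intro Gamma_real_pos) simp
  moreover have "exp (\<sigma> * x) * (1 + exp x) powr (-(2*\<sigma>)) \<ge> 0" by simp
  ultimately show ?thesis unfolding rr_def
    by (simp add: abs_mult mult.assoc mult_left_le)
qed

lemma rr_cont: "continuous_on UNIV (rr \<sigma>)"
  unfolding rr_def[abs_def]
  by (intro continuous_intros continuous_on_powr) (auto intro: add_pos_pos simp: add_nonneg_eq_0_iff)

lemma line_integral:
  fixes \<sigma> c :: real assumes s: "\<sigma> > 0"
  shows "integrable lborel (\<lambda>y. (cmod (Gamma (Complex \<sigma> y)))\<^sup>2)"
    and "(\<integral>y. complex_of_real ((cmod (Gamma (Complex \<sigma> y)))\<^sup>2) * iexp (y*c) \<partial>lborel)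
          = complex_of_real (2*pi*rr \<sigma> (-c))"
proof -
  have Rm: "(\<lambda>y. (cmod (Gamma (Complex \<sigma> y)))\<^sup>2) \<in> borel_measurable borel"
    using gamma_line_meas[of \<sigma>] by measurable
  have ft: "(\<integral>x. complex_of_real (rr \<sigma> x) * iexp (y*x) \<partial>lborel) = complex_of_real ((cmod (Gamma (Complex \<sigma> y)))\<^sup>2)" for y
    by (simp only: complex_norm_square autocorr(1)[OF s])
  note FI = fourier_inversion[OF autocorr(2)[OF s] rr_cont rr_bound[OF s] Rm _ ft]
  show "integrable lborel (\<lambda>y. (cmod (Gamma (Complex \<sigma> y)))\<^sup>2)"
    using FI(1) by simp
  show "(\<integral>y. complex_of_real ((cmod (Gamma (Complex \<sigma> y)))\<^sup>2) * iexp (y*c) \<partial>lborel)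
          = complex_of_real (2*pi*rr \<sigma> (-c))"
    using FI(2) by simp
qed



definition PM :: "(nat \<times> real) measure" where
  "PM = count_space UNIV \<Otimes>\<^sub>M lborel"

definition Phi :: "nat \<times> real \<Rightarrow> complex" where
  "Phi = (\<lambda>(k, y). Complex ((real k - 1) / 2) y)"

definition TT :: "complex \<Rightarrow> complex" where
  "TT w = w / (1 + w)"

definition WW :: "nat \<times> real \<Rightarrow> real" where
  "WW = (\<lambda>(k, y). mu_weight k y)"

lemma sets_PM[measurable_cong]: "sets PM = sets (count_space UNIV \<Otimes>\<^sub>M lborel)"
  unfolding PM_def ..

lemma fst_real_meas[measurable]: "(\<lambda>p. real (fst p)) \<in> borel_measurable (count_space UNIV \<Otimes>\<^sub>M lborel)"
proof -
  have "(real :: nat \<Rightarrow> real) \<in> count_space UNIV \<rightarrow>\<^sub>M borel" by simp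
  from measurable_compose[OF measurable_fst this] show ?thesis by (simp add: comp_def)
qed

lemma fst_fact_meas[measurable]: "(\<lambda>p. fact (fst p) :: real) \<in> borel_measurable (count_space UNIV \<Otimes>\<^sub>M lborel)"
proof -
  have "(fact :: nat \<Rightarrow> real) \<in> count_space UNIV \<rightarrow>\<^sub>M borel" by simp
  from measurable_compose[OF measurable_fst this] show ?thesis by (simp add: comp_def)
qed

lemma Gamma_complex_meas[measurable]: "(Gamma :: complex \<Rightarrow> complex) \<in> borel_measurable borel"
proof -
  have "rGamma \<in> borel_measurable (borel :: complex measure)"
    by (rule borel_measurable_continuous_onI) (rule continuous_on_rGamma)
  then have "(\<lambda>z. inverse (rGamma z :: complex)) \<in> borel_measurable borel" by measurable
  then show ?thesis by (simp add: rGamma_inverse_Gamma)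
qed

lemma Phi_meas[measurable]: "Phi \<in> PM \<rightarrow>\<^sub>M borel"
proof -
  have "Phi = (\<lambda>p. complex_of_real ((real (fst p) - 1) / 2) + \<i> * complex_of_real (snd p))"
    unfolding Phi_def by (auto simp: complex_eq_iff)
  moreover have "(\<lambda>p. complex_of_real ((real (fst p) - 1) / 2) + \<i> * complex_of_real (snd p)) \<in> PM \<rightarrow>\<^sub>M borel"
    unfolding PM_def by measurable
  ultimately show ?thesis by simp
qed

lemma TT_meas[measurable]: "TT \<in> borel \<rightarrow>\<^sub>M borel"
  unfolding TT_def by measurable

lemma WW_meas[measurable]: "WW \<in> borel_measurable PM"
proof -
  have "WW = (\<lambda>p. (cmod (Gamma (complex_of_real ((real (fst p) - 1) / 2 + 1) + \<i> * complex_of_real (snd p))))\<^sup>2 / (2 * pi * fact (fst p)))"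
    unfolding WW_def mu_weight_def by (auto simp: Complex_eq)
  moreover have "(\<lambda>p. (cmod (Gamma (complex_of_real ((real (fst p) - 1) / 2 + 1) + \<i> * complex_of_real (snd p))))\<^sup>2 / (2 * pi * fact (fst p))) \<in> borel_measurable PM"
    unfolding PM_def by measurable
  ultimately show ?thesis by simp
qed

lemma WW_nonneg: "WW p \<ge> 0"
  unfolding WW_def mu_weight_def by (auto split: prod.splits)

lemma mu_tilde_eq: "mu_tilde = distr (density PM (\<lambda>p. ennreal (WW p))) borel (\<lambda>p. TT (Phi p))"
proof -
  have "mu = distr (density PM (\<lambda>p. ennreal (WW p))) borel Phi"
    unfolding mu_def PM_def WW_def Phi_def by (simp add: case_prod_beta')
  then have "mu_tilde = distr (distr (density PM (\<lambda>p. ennreal (WW p))) borel Phi) borel TT"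
    unfolding mu_tilde_def TT_def[abs_def] by simp
  also have "\<dots> = distr (density PM (\<lambda>p. ennreal (WW p))) borel (TT \<circ> Phi)"
    by (rule distr_distr) auto
  finally show ?thesis by (simp add: comp_def)
qed

lemma mt_integrable:
  fixes F :: "complex \<Rightarrow> 'b::{banach, second_countable_topology}"
  assumes [measurable]: "F \<in> borel_measurable borel"
  shows "integrable mu_tilde F \<longleftrightarrow> integrable PM (\<lambda>p. WW p *\<^sub>R F (TT (Phi p)))"
  unfolding mu_tilde_eq
  by (subst integrable_distr_eq) (auto simp: integrable_density WW_nonneg)

lemma mt_integral:
  fixes F :: "complex \<Rightarrow> 'b::{banach, second_countable_topology}"
  assumes [measurable]: "F \<in> borel_measurable borel"
  shows "integral\<^sup>L mu_tilde F = integral\<^sup>L PM (\<lambda>p. WW p *\<^sub>R F (TT (Phi p)))"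
  unfolding mu_tilde_eq
  by (subst integral_distr) (auto simp: integral_density WW_nonneg)

lemma mt_AE:
  assumes "{z. P z} \<in> sets borel" "\<And>p. P (TT (Phi p))"
  shows "AE z in mu_tilde. P z"
  unfolding mu_tilde_eq
  using assms by (subst AE_distr_iff) (auto simp: AE_density)

lemma psf: "pair_sigma_finite (count_space (UNIV::nat set)) lborel"
  by (intro pair_sigma_finite.intro sigma_finite_measure_count_space_countable) (auto intro: lborel.sigma_finite_measure_axioms)

lemma PM_integrable:
  fixes G :: "nat \<times> real \<Rightarrow> 'b::{banach, second_countable_topology}"
  assumes "G \<in> borel_measurable PM"
    and "summable (\<lambda>k. \<integral>y. norm (G (k, y)) \<partial>lborel)"
    and "\<And>k. integrable lborel (\<lambda>y. G (k, y))"
  shows "integrable PM G"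
  unfolding PM_def
proof (rule pair_sigma_finite.Fubini_integrable[OF psf])
  show "G \<in> borel_measurable (count_space UNIV \<Otimes>\<^sub>M lborel)" using assms(1) unfolding PM_def .
  have "summable (\<lambda>k. norm (\<integral>y. norm (G (k, y)) \<partial>lborel))"
    using assms(2) by simp
  then show "integrable (count_space UNIV) (\<lambda>k. \<integral>y. norm (G (k, y)) \<partial>lborel)"
    by (simp add: integrable_count_space_nat_iff)
  show "AE k in count_space UNIV. integrable lborel (\<lambda>y. G (k, y))"
    using assms(3) by simp
qed

lemma PM_integral:
  fixes G :: "nat \<times> real \<Rightarrow> 'b::{banach, second_countable_topology}"
  assumes "integrable PM G"
  shows "(\<lambda>k. \<integral>y. G (k, y) \<partial>lborel) sums integral\<^sup>L PM G"
proof -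
  have G: "integrable (count_space UNIV \<Otimes>\<^sub>M lborel) G" using assms unfolding PM_def .
  have "integrable (count_space UNIV) (\<lambda>k. \<integral>y. G (k, y) \<partial>lborel)"
    by (rule pair_sigma_finite.integrable_fst'[OF psf G])
  then have "(\<lambda>k. \<integral>y. G (k, y) \<partial>lborel) sums (\<integral>k. (\<integral>y. G (k, y) \<partial>lborel) \<partial>count_space UNIV)"
    by (rule sums_integral_count_space_nat)
  also have "(\<integral>k. (\<integral>y. G (k, y) \<partial>lborel) \<partial>count_space UNIV) = integral\<^sup>L PM G"
    unfolding PM_def by (rule pair_sigma_finite.integral_fst'[OF psf G])
  finally show ?thesis .
qed



lemma Re_Phi: "Re (Phi (k, y)) = (real k - 1) / 2" by (simp add: Phi_def)

lemma Phi_ne: "1 + Phi p \<noteq> 0"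
proof
  assume "1 + Phi p = 0"
  then have "Re (1 + Phi p) = 0" by simp
  moreover obtain k y where "p = (k, y)" by (cases p)
  ultimately have "1 + (real k - 1) / 2 = 0" by (simp add: Re_Phi)
  then show False by (simp add: field_simps)
qed

lemma Psi_TT: "1 + w \<noteq> 0 \<Longrightarrow> Psi (TT w) = w"
  unfolding Psi_def TT_def by (simp add: field_simps)

lemma gen_TT: "gen_fun a (TT (Phi p)) = exp (Phi p * complex_of_real (ln a))"
  unfolding gen_fun_def using Psi_TT[OF Phi_ne] by simp

lemma exp_Phi: "a > 0 \<Longrightarrow> exp (Phi (k, y) * complex_of_real (ln a)) = complex_of_real (a powr ((real k - 1) / 2)) * iexp (y * ln a)"
proof -
  assume a: "a > 0"
  have "Phi (k, y) * complex_of_real (ln a) = complex_of_real ((real k - 1) / 2 * ln a) + \<i> * complex_of_real (y * ln a)"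
    by (simp add: Phi_def complex_eq_iff)
  then show ?thesis using a by (simp add: exp_add exp_of_real[symmetric] powr_def mult.commute)
qed

lemma WW_eq: "WW (k, y) = (cmod (Gamma (Complex ((real k - 1) / 2 + 1) y)))\<^sup>2 / (2 * pi * fact k)"
  unfolding WW_def mu_weight_def by simp

lemma cancel_aux: "(f::real) \<noteq> 0 \<Longrightarrow> A * (f * B * C) / f = A * B * C"
  by (simp add: field_simps)

lemma rr_at:
  assumes a: "a > 0"
  shows "a powr ((real k - 1) / 2) * rr ((real k - 1) / 2 + 1) (- ln a) / fact k = a^k / (1+a)^(k+1)"
proof -
  define s where "s = (real k - 1) / 2 + 1"
  have "2 * s = 1 + of_nat k" unfolding s_def by (simp add: field_simps)
  then have g: "Gamma (2 * s) = fact k"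
    using Gamma_fact[of k] by simp
  have e1: "exp (s * - ln a) = a powr (-s)" using a by (simp add: powr_def)
  have e2: "1 + exp (- ln a) = (1 + a) / a" using a by (simp add: exp_minus field_simps)
  have ts: "2 * s = real (k + 1)" unfolding s_def by (simp add: field_simps)
  have pa: "(1 + a) / a > 0" using a by simp
  have e34: "((1 + a) / a) powr (-(2 * s)) = a^(k+1) / (1+a)^(k+1)"
  proof -
    have "((1 + a) / a) powr (-(2 * s)) = 1 / ((1 + a) / a) powr (real (k + 1))"
      by (simp only: ts powr_minus_divide)
    also have "((1 + a) / a) powr (real (k + 1)) = ((1 + a) / a) ^ (k + 1)"
      using pa by (rule powr_realpow)
    also have "1 / ((1 + a) / a) ^ (k + 1) = a^(k+1) / (1+a)^(k+1)"
      using a by (simp add: power_divide)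
    finally show ?thesis .
  qed
  have e5: "a powr ((real k - 1) / 2) * a powr (-s) * a^(k+1) = a^k"
  proof -
    have "a powr ((real k - 1) / 2) * a powr (-s) = a powr (-1)"
      using a unfolding s_def by (simp add: powr_add[symmetric] field_simps)
    then show ?thesis using a by (simp add: powr_minus field_simps)
  qed
  have "a powr ((real k - 1) / 2) * rr s (- ln a) / fact k
      = a powr ((real k - 1) / 2) * (fact k * a powr (-s) * (a^(k+1) / (1+a)^(k+1))) / fact k"
    unfolding rr_def g e1 e2 e34 by simp
  also have "\<dots> = a powr ((real k - 1) / 2) * a powr (-s) * (a^(k+1) / (1+a)^(k+1))"
    by (rule cancel_aux) simp
  also have "\<dots> = (a powr ((real k - 1) / 2) * a powr (-s) * a^(k+1)) / (1+a)^(k+1)"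
    by simp
  also have "\<dots> = a^k / (1+a)^(k+1)" by (simp only: e5)
  finally show ?thesis unfolding s_def .
qed

lemma rr_at0: "rr ((real k - 1) / 2 + 1) 0 = fact k / 2^(k+1)"
proof -
  define s where "s = (real k - 1) / 2 + 1"
  have ts: "2 * s = real (k + 1)" unfolding s_def by (simp add: field_simps)
  have "2 * s = 1 + of_nat k" unfolding s_def by (simp add: field_simps)
  then have g: "Gamma (2 * s) = fact k"
    using Gamma_fact[of k] by simp
  have "(2::real) powr (-(2 * s)) = 1 / 2 powr (real (k + 1))"
    by (simp only: ts powr_minus_divide)
  also have "(2::real) powr (real (k + 1)) = 2 ^ (k + 1)" by (rule powr_realpow) simp
  finally have p: "(2::real) powr (-(2 * s)) = 1 / 2 ^ (k + 1)" .
  have "rr s 0 = Gamma (2 * s) * (1 + 1) powr (-(2 * s))" unfolding rr_def by simp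
  also have "\<dots> = fact k / 2^(k+1)" using p g by simp
  finally show ?thesis unfolding s_def .
qed

lemma sk_pos: "(real k - 1) / 2 + 1 > 0" by (simp add: field_simps)

lemma int_gamma_sq:
  "(\<integral>y. (cmod (Gamma (Complex ((real k - 1) / 2 + 1) y)))\<^sup>2 \<partial>lborel) = 2 * pi * (fact k / 2^(k+1))"
proof -
  have "complex_of_real (\<integral>y. (cmod (Gamma (Complex ((real k - 1) / 2 + 1) y)))\<^sup>2 \<partial>lborel)
     = (\<integral>y. complex_of_real ((cmod (Gamma (Complex ((real k - 1) / 2 + 1) y)))\<^sup>2) * iexp (y * 0) \<partial>lborel)"
    by (simp del: of_real_power)
  also have "\<dots> = complex_of_real (2 * pi * rr ((real k - 1) / 2 + 1) (-0))"
    by (rule line_integral(2)[OF sk_pos])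
  also have "\<dots> = complex_of_real (2 * pi * (fact k / 2^(k+1)))" by (simp only: rr_at0 minus_zero)
  finally show ?thesis by (simp only: of_real_eq_iff)
qed

lemma line_gen:
  fixes a :: real and k :: nat assumes a: "a > 0"
  defines "I \<equiv> (\<lambda>y. WW (k, y) *\<^sub>R exp (Phi (k, y) * complex_of_real (ln a)))"
  shows "integrable lborel I"
    and "integral\<^sup>L lborel I = complex_of_real (a^k / (1+a)^(k+1))"
    and "(\<integral>y. norm (I y) \<partial>lborel) = a powr ((real k - 1) / 2) / 2^(k+1)"
proof -
  define s where "s = (real k - 1) / 2 + 1"
  have s: "s > 0" unfolding s_def by (rule sk_pos)
  define c where "c = a powr ((real k - 1) / 2) / (2 * pi * fact k)"
  have c_nn: "c \<ge> 0" unfolding c_def by simp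
  define R where "R y = (cmod (Gamma (Complex s y)))\<^sup>2" for y
  have I_eq: "I = (\<lambda>y. complex_of_real c * (complex_of_real (R y) * iexp (y * ln a)))"
    unfolding I_def using a by (auto simp: WW_eq exp_Phi scaleR_conv_of_real c_def R_def s_def)
  have RI: "integrable lborel R" unfolding R_def by (rule line_integral(1)[OF s])
  have R_meas: "R \<in> borel_measurable borel" unfolding R_def using gamma_line_meas[of s] by measurable
  have RI': "integrable lborel (\<lambda>y. complex_of_real (R y) * iexp (y * ln a))"
  proof -
    have "(\<lambda>y. complex_of_real (R y) * iexp (y * ln a)) \<in> borel_measurable lborel" using R_meas by measurable
    moreover have "AE y in lborel. norm (complex_of_real (R y) * iexp (y * ln a)) \<le> norm (R y)"
      by (simp add: norm_mult)
    ultimately show ?thesis using RI Bochner_Integration.integrable_bound by blast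
  qed
  show "integrable lborel I" unfolding I_eq using RI' by simp
  have "integral\<^sup>L lborel I = complex_of_real c * (\<integral>y. complex_of_real (R y) * iexp (y * ln a) \<partial>lborel)"
    unfolding I_eq by (rule integral_mult_right_zero)
  also have "(\<integral>y. complex_of_real (R y) * iexp (y * ln a) \<partial>lborel) = complex_of_real (2*pi*rr s (- ln a))"
    unfolding R_def by (rule line_integral(2)[OF s])
  also have "complex_of_real c * complex_of_real (2*pi*rr s (- ln a)) = complex_of_real (a powr ((real k - 1) / 2) * rr s (- ln a) / fact k)"
    unfolding c_def by simp
  also have "a powr ((real k - 1) / 2) * rr s (- ln a) / fact k = a^k / (1+a)^(k+1)"
    unfolding s_def by (rule rr_at[OF a])
  finally show "integral\<^sup>L lborel I = complex_of_real (a^k / (1+a)^(k+1))" .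
  have "(\<lambda>y. norm (I y)) = (\<lambda>y. c * R y)"
    unfolding I_eq using c_nn by (auto simp: norm_mult R_def norm_power)
  then have "(\<integral>y. norm (I y) \<partial>lborel) = c * (\<integral>y. R y \<partial>lborel)" by simp
  also have "(\<integral>y. R y \<partial>lborel) = 2 * pi * (fact k / 2^(k+1))"
    unfolding R_def s_def by (rule int_gamma_sq)
  finally show "(\<integral>y. norm (I y) \<partial>lborel) = a powr ((real k - 1) / 2) / 2^(k+1)"
    unfolding c_def by simp
qed



lemma gen_fun_meas[measurable]: "gen_fun a \<in> borel_measurable borel"
  unfolding gen_fun_def[abs_def] Psi_def by measurable

lemma gen_PM_meas: "(\<lambda>p. WW p *\<^sub>R exp (Phi p * complex_of_real (ln a))) \<in> borel_measurable PM"
  by measurable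

lemma geom_sum:
  fixes a :: real assumes a: "a > 0"
  shows "(\<lambda>k. a^k / (1+a)^(k+1)) sums 1"
proof -
  have q: "norm (a / (1+a)) < 1" using a by simp
  have "(\<lambda>k. (a / (1+a))^k) sums (1 / (1 - a / (1+a)))" by (rule geometric_sums[OF q])
  then have "(\<lambda>k. (1 / (1+a)) * (a / (1+a))^k) sums ((1 / (1+a)) * (1 / (1 - a / (1+a))))"
    by (rule sums_mult)
  moreover have "(1 / (1+a)) * (1 / (1 - a / (1+a))) = 1" using a by (simp add: field_simps)
  moreover have "(\<lambda>k. (1 / (1+a)) * (a / (1+a))^k) = (\<lambda>k. a^k / (1+a)^(k+1))"
    by (auto simp: power_divide)
  ultimately show ?thesis by simp
qed

lemma gen_int:
  fixes a :: real assumes a: "0 < a" "a \<le> 1"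
  shows "integrable mu_tilde (gen_fun a)" "integral\<^sup>L mu_tilde (gen_fun a) = 1"
proof -
  define G where "G p = WW p *\<^sub>R exp (Phi p * complex_of_real (ln a))" for p
  have eq: "(\<lambda>p. WW p *\<^sub>R gen_fun a (TT (Phi p))) = G"
    unfolding G_def by (simp add: gen_TT)
  have sm: "summable (\<lambda>k. \<integral>y. norm (G (k, y)) \<partial>lborel)"
  proof (rule summable_comparison_test)
    show "\<exists>N. \<forall>n\<ge>N. norm (\<integral>y. norm (G (n, y)) \<partial>lborel) \<le> a powr (-1/2) * (1/2)^n"
    proof (intro exI allI impI)
      fix n :: nat
      have "(\<integral>y. norm (G (n, y)) \<partial>lborel) = a powr ((real n - 1) / 2) / 2^(n+1)"
        unfolding G_def by (rule line_gen(3)[OF a(1)])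
      moreover have "a powr ((real n - 1) / 2) \<le> a powr (-1/2)"
        using a by (intro powr_mono') (auto simp: field_simps)
      ultimately have "norm (\<integral>y. norm (G (n, y)) \<partial>lborel) = a powr ((real n - 1) / 2) / 2^(n+1)"
        by simp
      also have "\<dots> \<le> a powr (-1/2) / 2^(n+1)"
        using \<open>a powr ((real n - 1) / 2) \<le> a powr (-1/2)\<close> by (rule divide_right_mono) simp
      also have "\<dots> \<le> a powr (-1/2) * (1/2)^n"
        by (simp add: power_divide field_simps)
      finally show "norm (\<integral>y. norm (G (n, y)) \<partial>lborel) \<le> a powr (-1/2) * (1/2)^n" .
    qed
    show "summable (\<lambda>n. a powr (-1/2) * (1/2::real)^n)"
      by (intro summable_mult summable_geometric) simp
  qed
  have Gm: "G \<in> borel_measurable PM" unfolding G_def[abs_def] by (rule gen_PM_meas)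
  have Gk: "integrable lborel (\<lambda>y. G (k, y))" for k unfolding G_def by (rule line_gen(1)[OF a(1)])
  have GI: "integrable PM G" by (rule PM_integrable[OF Gm sm Gk])
  show "integrable mu_tilde (gen_fun a)"
    using GI eq by (simp add: mt_integrable)
  have "(\<lambda>k. \<integral>y. G (k, y) \<partial>lborel) sums integral\<^sup>L PM G" by (rule PM_integral[OF GI])
  moreover have "(\<lambda>k. \<integral>y. G (k, y) \<partial>lborel) = (\<lambda>k. complex_of_real (a^k / (1+a)^(k+1)))"
    unfolding G_def using line_gen(2)[OF a(1)] by auto
  ultimately have "(\<lambda>k. complex_of_real (a^k / (1+a)^(k+1))) sums integral\<^sup>L PM G" by simp
  moreover have "(\<lambda>k. complex_of_real (a^k / (1+a)^(k+1))) sums complex_of_real 1"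
    by (rule sums_of_real[OF geom_sum[OF a(1)]])
  ultimately have "integral\<^sup>L PM G = 1" using sums_unique2 by fastforce
  then show "integral\<^sup>L mu_tilde (gen_fun a) = 1"
    using eq by (simp add: mt_integral)
qed

lemma gen_fun_1: "gen_fun 1 z = 1" unfolding gen_fun_def by simp

lemma prob_mt: "prob_space mu_tilde"
proof -
  have I: "integrable mu_tilde (\<lambda>_. 1::complex)" using gen_int(1)[of 1] by (simp add: gen_fun_1[abs_def])
  have J: "integral\<^sup>L mu_tilde (\<lambda>_. 1::complex) = 1" using gen_int(2)[of 1] by (simp add: gen_fun_1[abs_def])
  have fin: "emeasure mu_tilde (space mu_tilde) < \<infinity>"
    using I unfolding integrable_iff_bounded by (simp add: nn_integral_const)
  then interpret finite_measure mu_tilde by (rule finite_measureI[OF less_imp_neq])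
  have "complex_of_real (measure mu_tilde (space mu_tilde)) = 1" using J by (simp add: scaleR_conv_of_real)
  then have "measure mu_tilde (space mu_tilde) = 1" by simp
  then show ?thesis by (intro prob_spaceI) (simp add: emeasure_eq_measure)
qed

lemma gen_bound:
  fixes a :: real assumes a: "0 < a" "a \<le> 1"
  shows "AE z in mu_tilde. norm (gen_fun a z) \<le> a powr (-1/2)"
proof (rule mt_AE)
  show "{z. norm (gen_fun a z) \<le> a powr (-1/2)} \<in> sets borel" by measurable
  fix p :: "nat \<times> real"
  obtain k y where p: "p = (k, y)" by (cases p)
  have "norm (gen_fun a (TT (Phi p))) = a powr ((real k - 1) / 2)"
    unfolding p gen_TT exp_Phi[OF a(1)] by (simp add: norm_mult)
  also have "\<dots> \<le> a powr (-1/2)" using a by (intro powr_mono') (auto simp: field_simps)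
  finally show "norm (gen_fun a (TT (Phi p))) \<le> a powr (-1/2)" .
qed



lemma L2_meas: "u \<in> L2 M \<Longrightarrow> u \<in> borel_measurable M" unfolding L2_def by simp
lemma L2_int: "u \<in> L2 M \<Longrightarrow> integrable M (\<lambda>z. (cmod (u z))\<^sup>2)" unfolding L2_def by simp

lemma L2_mult_integrable:
  assumes u: "u \<in> L2 M" and v: "v \<in> L2 M"
  shows "integrable M (\<lambda>z. u z * v z)"
proof -
  have "integrable M (\<lambda>z. (cmod (u z))\<^sup>2 + (cmod (v z))\<^sup>2)"
    using L2_int[OF u] L2_int[OF v] by (rule Bochner_Integration.integrable_add)
  moreover have "(\<lambda>z. u z * v z) \<in> borel_measurable M" using L2_meas[OF u] L2_meas[OF v] by measurable
  moreover have "AE z in M. norm (u z * v z) \<le> norm ((cmod (u z))\<^sup>2 + (cmod (v z))\<^sup>2)"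
  proof (rule AE_I2)
    fix z
    have "cmod (u z) * cmod (v z) \<le> (cmod (u z))\<^sup>2 + (cmod (v z))\<^sup>2"
      using sum_squares_bound[of "cmod (u z)" "cmod (v z)"] mult_nonneg_nonneg[OF norm_ge_zero norm_ge_zero, of "u z" "v z"]
      by linarith
    then show "norm (u z * v z) \<le> norm ((cmod (u z))\<^sup>2 + (cmod (v z))\<^sup>2)"
      by (simp add: norm_mult)
  qed
  ultimately show ?thesis using Bochner_Integration.integrable_bound by blast
qed

lemma L2_diff:
  assumes u: "u \<in> L2 M" and v: "v \<in> L2 M"
  shows "(\<lambda>z. u z - v z) \<in> L2 M"
proof -
  have "integrable M (\<lambda>z. 2 * (cmod (u z))\<^sup>2 + 2 * (cmod (v z))\<^sup>2)"
    using L2_int[OF u] L2_int[OF v] by auto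
  moreover have "(\<lambda>z. (cmod (u z - v z))\<^sup>2) \<in> borel_measurable M" using L2_meas[OF u] L2_meas[OF v] by measurable
  moreover have "AE z in M. norm ((cmod (u z - v z))\<^sup>2) \<le> norm (2 * (cmod (u z))\<^sup>2 + 2 * (cmod (v z))\<^sup>2)"
  proof (rule AE_I2)
    fix z
    have "cmod (u z - v z) \<le> cmod (u z) + cmod (v z)" by (rule norm_triangle_ineq4)
    then have "(cmod (u z - v z))\<^sup>2 \<le> (cmod (u z) + cmod (v z))\<^sup>2" by (simp add: power_mono)
    also have "\<dots> \<le> 2 * (cmod (u z))\<^sup>2 + 2 * (cmod (v z))\<^sup>2"
      by (smt (verit) sum_squares_bound power2_sum)
    finally show "norm ((cmod (u z - v z))\<^sup>2) \<le> norm (2 * (cmod (u z))\<^sup>2 + 2 * (cmod (v z))\<^sup>2)"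
      by simp
  qed
  ultimately have "integrable M (\<lambda>z. (cmod (u z - v z))\<^sup>2)" using Bochner_Integration.integrable_bound by blast
  moreover have "(\<lambda>z. u z - v z) \<in> borel_measurable M" using L2_meas[OF u] L2_meas[OF v] by measurable
  ultimately show ?thesis unfolding L2_def by simp
qed

lemma L2_CS:
  assumes u: "u \<in> L2 M" and v: "v \<in> L2 M"
  shows "(cmod (\<integral>z. u z * v z \<partial>M))\<^sup>2 \<le> (\<integral>z. (cmod (u z))\<^sup>2 \<partial>M) * (\<integral>z. (cmod (v z))\<^sup>2 \<partial>M)"
proof -
  have um[measurable]: "u \<in> borel_measurable M" by (rule L2_meas[OF u])
  have vm[measurable]: "v \<in> borel_measurable M" by (rule L2_meas[OF v])
  have iuv: "integrable M (\<lambda>z. u z * v z)" by (rule L2_mult_integrable[OF u v])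
  have iuv': "integrable M (\<lambda>z. cmod (u z) * cmod (v z))"
    using iuv integrable_norm[OF iuv] by (simp add: norm_mult)
  have A: "cmod (\<integral>z. u z * v z \<partial>M) \<le> (\<integral>z. cmod (u z) * cmod (v z) \<partial>M)"
    using integral_norm_bound[of M "\<lambda>z. u z * v z"] by (simp add: norm_mult)
  have B: "(\<integral>z. cmod (u z) * cmod (v z) \<partial>M)\<^sup>2 \<le> (\<integral>z. (cmod (u z))\<^sup>2 \<partial>M) * (\<integral>z. (cmod (v z))\<^sup>2 \<partial>M)"
  proof -
    have "(\<integral>\<^sup>+z. ennreal (cmod (u z)) * ennreal (cmod (v z)) \<partial>M)\<^sup>2
        \<le> (\<integral>\<^sup>+z. ennreal (cmod (u z)) ^ 2 \<partial>M) * (\<integral>\<^sup>+z. ennreal (cmod (v z)) ^ 2 \<partial>M)"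
      by (rule Cauchy_Schwarz_nn_integral) measurable
    moreover have "(\<integral>\<^sup>+z. ennreal (cmod (u z)) * ennreal (cmod (v z)) \<partial>M) = ennreal (\<integral>z. cmod (u z) * cmod (v z) \<partial>M)"
      using iuv' by (subst nn_integral_eq_integral[symmetric]) (auto simp: ennreal_mult)
    moreover have "(\<integral>\<^sup>+z. ennreal (cmod (u z)) ^ 2 \<partial>M) = ennreal (\<integral>z. (cmod (u z))\<^sup>2 \<partial>M)"
      using L2_int[OF u] by (subst nn_integral_eq_integral[symmetric]) (auto simp: ennreal_power)
    moreover have "(\<integral>\<^sup>+z. ennreal (cmod (v z)) ^ 2 \<partial>M) = ennreal (\<integral>z. (cmod (v z))\<^sup>2 \<partial>M)"
      using L2_int[OF v] by (subst nn_integral_eq_integral[symmetric]) (auto simp: ennreal_power)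
    ultimately have "ennreal ((\<integral>z. cmod (u z) * cmod (v z) \<partial>M)\<^sup>2)
        \<le> ennreal ((\<integral>z. (cmod (u z))\<^sup>2 \<partial>M) * (\<integral>z. (cmod (v z))\<^sup>2 \<partial>M))"
      by (simp add: ennreal_power ennreal_mult integral_nonneg_AE)
    then show ?thesis
      by (subst (asm) ennreal_le_iff) (auto intro!: mult_nonneg_nonneg integral_nonneg_AE)
  qed
  have "(cmod (\<integral>z. u z * v z \<partial>M))\<^sup>2 \<le> (\<integral>z. cmod (u z) * cmod (v z) \<partial>M)\<^sup>2"
    by (rule power_mono[OF A]) simp
  with B show ?thesis by linarith
qed



lemma sets_mt[measurable_cong]: "sets mu_tilde = sets borel" unfolding mu_tilde_def by simp

lemma gen_fun_mult: "0 < a \<Longrightarrow> 0 < b \<Longrightarrow> gen_fun a z * gen_fun b z = gen_fun (a * b) z"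
  unfolding gen_fun_def by (simp add: ln_mult distrib_left exp_add)

lemma L2_bounded:
  assumes "prob_space M" "u \<in> borel_measurable M" "AE z in M. cmod (u z) \<le> B"
  shows "u \<in> L2 M" "integrable M u"
proof -
  interpret prob_space M by fact
  have "AE z in M. norm ((cmod (u z))\<^sup>2) \<le> B\<^sup>2"
    using assms(3) by eventually_elim (simp add: power_mono)
  then have "integrable M (\<lambda>z. (cmod (u z))\<^sup>2)"
    using assms(2) by (intro integrable_const_bound[where B="B\<^sup>2"]) auto
  then show "u \<in> L2 M" using assms(2) unfolding L2_def by simp
  show "integrable M u" using assms by (intro integrable_const_bound[where B=B]) auto
qed

lemma span_props:
  assumes "g \<in> gen_span"
  shows "g \<in> L2 mu_tilde" "integrable mu_tilde g"
proof -
  obtain n :: nat and c :: "nat \<Rightarrow> complex" and a :: "nat \<Rightarrow> real" where a: "\<forall>i<n. 0 < a i \<and> a i \<le> 1" and g: "g = (\<lambda>z. \<Sum>i<n. c i * gen_fun (a i) z)"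
    using assms unfolding gen_span_def by blast
  have m: "g \<in> borel_measurable mu_tilde" unfolding g by measurable
  have "AE z in mu_tilde. \<forall>i\<in>{..<n}. norm (gen_fun (a i) z) \<le> a i powr (-1/2)"
    using a by (intro eventually_ball_finite ballI gen_bound) auto
  then have "AE z in mu_tilde. cmod (g z) \<le> (\<Sum>i<n. cmod (c i) * a i powr (-1/2))"
  proof eventually_elim
    case (elim z)
    have "cmod (g z) \<le> (\<Sum>i<n. cmod (c i * gen_fun (a i) z))" unfolding g by (rule norm_sum)
    also have "\<dots> \<le> (\<Sum>i<n. cmod (c i) * a i powr (-1/2))"
      using elim by (intro sum_mono) (auto simp: norm_mult intro: mult_left_mono)
    finally show ?case .
  qed
  with prob_mt m show "g \<in> L2 mu_tilde" "integrable mu_tilde g" by (auto intro: L2_bounded)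
qed

lemma span_mult:
  assumes "g \<in> gen_span" "h \<in> gen_span"
  shows "(\<integral>z. g z * h z \<partial>mu_tilde) = integral\<^sup>L mu_tilde g * integral\<^sup>L mu_tilde h"
proof -
  obtain n :: nat and c :: "nat \<Rightarrow> complex" and a :: "nat \<Rightarrow> real" where a: "\<forall>i<n. 0 < a i \<and> a i \<le> 1" and g: "g = (\<lambda>z. \<Sum>i<n. c i * gen_fun (a i) z)"
    using assms(1) unfolding gen_span_def by blast
  obtain m :: nat and d :: "nat \<Rightarrow> complex" and b :: "nat \<Rightarrow> real" where b: "\<forall>j<m. 0 < b j \<and> b j \<le> 1" and h: "h = (\<lambda>z. \<Sum>j<m. d j * gen_fun (b j) z)"
    using assms(2) unfolding gen_span_def by blast
  have ab: "0 < a i * b j \<and> a i * b j \<le> 1" if "i < n" "j < m" for i j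
  proof -
    have "0 < a i" "a i \<le> 1" "0 < b j" "b j \<le> 1" using a b that by auto
    then show ?thesis using mult_le_one[of "a i" "b j"] by auto
  qed
  have ig: "integral\<^sup>L mu_tilde g = (\<Sum>i<n. c i)"
    unfolding g using a by (subst Bochner_Integration.integral_sum) (auto simp: gen_int)
  have ih: "integral\<^sup>L mu_tilde h = (\<Sum>j<m. d j)"
    unfolding h using b by (subst Bochner_Integration.integral_sum) (auto simp: gen_int)
  have gh: "(\<lambda>z. g z * h z) = (\<lambda>z. \<Sum>i<n. \<Sum>j<m. (c i * d j) * gen_fun (a i * b j) z)"
  proof
    fix z
    have "g z * h z = (\<Sum>i<n. \<Sum>j<m. (c i * gen_fun (a i) z) * (d j * gen_fun (b j) z))"
      unfolding g h by (rule sum_product)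
    also have "\<dots> = (\<Sum>i<n. \<Sum>j<m. (c i * d j) * gen_fun (a i * b j) z)"
      using a b by (intro sum.cong refl) (auto simp: gen_fun_mult[symmetric] mult_ac)
    finally show "g z * h z = (\<Sum>i<n. \<Sum>j<m. (c i * d j) * gen_fun (a i * b j) z)" .
  qed
  have "(\<integral>z. g z * h z \<partial>mu_tilde) = (\<Sum>i<n. \<Sum>j<m. (c i * d j))"
    unfolding gh using ab
    by (subst Bochner_Integration.integral_sum, force simp: gen_int, intro sum.cong refl,
        subst Bochner_Integration.integral_sum, force simp: gen_int, intro sum.cong refl) (simp add: gen_int)
  also have "\<dots> = (\<Sum>i<n. c i) * (\<Sum>j<m. d j)" by (simp add: sum_product)
  finally show ?thesis by (simp add: ig ih)
qed



definition lam :: "complex measure \<Rightarrow> (complex \<Rightarrow> complex) \<Rightarrow> (complex \<Rightarrow> complex) \<Rightarrow> complex" where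
  "lam M u v = (\<integral>z. u z * v z \<partial>M) - integral\<^sup>L M u * integral\<^sup>L M v"

lemma const_L2: "prob_space M \<Longrightarrow> (\<lambda>_. c) \<in> L2 M"
  by (rule L2_bounded(1)[where B="cmod c"]) auto

lemma L2_integrable: "prob_space M \<Longrightarrow> u \<in> L2 M \<Longrightarrow> integrable M u"
  using L2_mult_integrable[of u M "\<lambda>_. 1"] const_L2[of M 1] by simp

lemma int_sq_le:
  assumes P: "prob_space M" and u: "u \<in> L2 M"
  shows "(cmod (integral\<^sup>L M u))\<^sup>2 \<le> (\<integral>z. (cmod (u z))\<^sup>2 \<partial>M)"
proof -
  interpret prob_space M by (rule P)
  have "(cmod (\<integral>z. u z * 1 \<partial>M))\<^sup>2 \<le> (\<integral>z. (cmod (u z))\<^sup>2 \<partial>M) * (\<integral>z. (cmod ((\<lambda>_. 1::complex) z))\<^sup>2 \<partial>M)"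
    by (rule L2_CS[OF u const_L2[OF P]])
  then show ?thesis by (simp add: prob_space)
qed

lemma lam_bound:
  assumes P: "prob_space M" and u: "u \<in> L2 M" and v: "v \<in> L2 M"
  shows "(cmod (lam M u v))\<^sup>2 \<le> 4 * (\<integral>z. (cmod (u z))\<^sup>2 \<partial>M) * (\<integral>z. (cmod (v z))\<^sup>2 \<partial>M)"
proof -
  define Nu where "Nu = (\<integral>z. (cmod (u z))\<^sup>2 \<partial>M)"
  define Nv where "Nv = (\<integral>z. (cmod (v z))\<^sup>2 \<partial>M)"
  define X where "X = (\<integral>z. u z * v z \<partial>M)"
  define Y where "Y = integral\<^sup>L M u * integral\<^sup>L M v"
  have Nu: "Nu \<ge> 0" unfolding Nu_def by (rule integral_nonneg_AE) auto
  have Nv: "Nv \<ge> 0" unfolding Nv_def by (rule integral_nonneg_AE) auto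
  have X: "(cmod X)\<^sup>2 \<le> Nu * Nv" unfolding X_def Nu_def Nv_def by (rule L2_CS[OF u v])
  have Y: "(cmod Y)\<^sup>2 \<le> Nu * Nv"
  proof -
    have "(cmod Y)\<^sup>2 = (cmod (integral\<^sup>L M u))\<^sup>2 * (cmod (integral\<^sup>L M v))\<^sup>2"
      unfolding Y_def by (simp add: norm_mult power_mult_distrib)
    also have "\<dots> \<le> Nu * Nv"
      unfolding Nu_def Nv_def using int_sq_le[OF P u] int_sq_le[OF P v]
      by (intro mult_mono) (auto intro: order.trans[OF zero_le_power2])
    finally show ?thesis .
  qed
  have "cmod (X - Y) \<le> cmod X + cmod Y" by (rule norm_triangle_ineq4)
  then have "(cmod (X - Y))\<^sup>2 \<le> (cmod X + cmod Y)\<^sup>2" by (simp add: power_mono)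
  also have "\<dots> \<le> 2 * (cmod X)\<^sup>2 + 2 * (cmod Y)\<^sup>2"
    using sum_squares_bound[of "cmod X" "cmod Y"] by (simp add: power2_sum)
  also have "\<dots> \<le> 4 * Nu * Nv" using X Y by simp
  finally show ?thesis unfolding lam_def X_def Y_def Nu_def Nv_def .
qed

lemma lam_diff_left:
  assumes P: "prob_space M" and f: "f \<in> L2 M" and g: "g \<in> L2 M" and k: "k \<in> L2 M"
  shows "lam M f k = lam M (\<lambda>z. f z - g z) k + lam M g k"
proof -
  have i1: "integrable M (\<lambda>z. f z * k z)" by (rule L2_mult_integrable[OF f k])
  have i2: "integrable M (\<lambda>z. g z * k z)" by (rule L2_mult_integrable[OF g k])
  have if': "integrable M f" by (rule L2_integrable[OF P f])
  have ig: "integrable M g" by (rule L2_integrable[OF P g])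
  have "(\<integral>z. (f z - g z) * k z \<partial>M) = (\<integral>z. f z * k z - g z * k z \<partial>M)"
    by (simp add: algebra_simps)
  also have "\<dots> = (\<integral>z. f z * k z \<partial>M) - (\<integral>z. g z * k z \<partial>M)"
    by (rule Bochner_Integration.integral_diff[OF i1 i2])
  finally have a: "(\<integral>z. (f z - g z) * k z \<partial>M) = (\<integral>z. f z * k z \<partial>M) - (\<integral>z. g z * k z \<partial>M)" .
  have b: "(\<integral>z. f z - g z \<partial>M) = integral\<^sup>L M f - integral\<^sup>L M g"
    by (rule Bochner_Integration.integral_diff[OF if' ig])
  show ?thesis unfolding lam_def a b by (simp add: algebra_simps)
qed

lemma lam_comm: "lam M u v = lam M v u"
  unfolding lam_def by (simp add: mult.commute)

lemma small_zero:
  fixes x C :: real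
  assumes C: "C \<ge> 0" and x: "x \<ge> 0" and h: "\<And>e. e > 0 \<Longrightarrow> x \<le> C * e"
  shows "x = 0"
proof (rule ccontr)
  assume "x \<noteq> 0"
  with x have xp: "x > 0" by simp
  have "x \<le> C * (x / (C + 1))" using h[of "x / (C + 1)"] xp C by simp
  also have "\<dots> < x" using xp C by (simp add: field_simps)
  finally show False by simp
qed

lemma H2_L2: "f \<in> H2 M \<Longrightarrow> f \<in> L2 M" unfolding H2_def by simp

lemma H2_approx:
  assumes "f \<in> H2 M" "e > 0"
  obtains g where "g \<in> gen_span" "(\<integral>z. (cmod (f z - g z))\<^sup>2 \<partial>M) < e"
  using assms unfolding H2_def by blast

lemma lam_span_zero:
  assumes f: "f \<in> H2 mu_tilde" and k: "k \<in> gen_span"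
  shows "lam mu_tilde f k = 0"
proof -
  have P: "prob_space mu_tilde" by (rule prob_mt)
  have fL: "f \<in> L2 mu_tilde" by (rule H2_L2[OF f])
  have kL: "k \<in> L2 mu_tilde" by (rule span_props(1)[OF k])
  define Nk where "Nk = (\<integral>z. (cmod (k z))\<^sup>2 \<partial>mu_tilde)"
  have Nk: "Nk \<ge> 0" unfolding Nk_def by (rule integral_nonneg_AE) auto
  have "(cmod (lam mu_tilde f k))\<^sup>2 = 0"
  proof (rule small_zero[where C="4 * Nk"])
    show "0 \<le> 4 * Nk" using Nk by simp
    show "0 \<le> (cmod (lam mu_tilde f k))\<^sup>2" by simp
    fix e :: real assume e: "e > 0"
    obtain g where g: "g \<in> gen_span" and ge: "(\<integral>z. (cmod (f z - g z))\<^sup>2 \<partial>mu_tilde) < e"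
      using H2_approx[OF f e] by blast
    have gL: "g \<in> L2 mu_tilde" by (rule span_props(1)[OF g])
    have "lam mu_tilde g k = 0" unfolding lam_def using span_mult[OF g k] by simp
    then have "lam mu_tilde f k = lam mu_tilde (\<lambda>z. f z - g z) k"
      using lam_diff_left[OF P fL gL kL] by simp
    then have "(cmod (lam mu_tilde f k))\<^sup>2 \<le> 4 * (\<integral>z. (cmod (f z - g z))\<^sup>2 \<partial>mu_tilde) * Nk"
      unfolding Nk_def using lam_bound[OF P L2_diff[OF fL gL] kL] by simp
    also have "\<dots> \<le> 4 * e * Nk" using ge Nk by (intro mult_right_mono) auto
    finally show "(cmod (lam mu_tilde f k))\<^sup>2 \<le> 4 * Nk * e" by (simp add: mult_ac)
  qed
  then show ?thesis by simp
qed

lemma lam_H2_zero: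
  assumes f: "f \<in> H2 mu_tilde" and h: "h \<in> H2 mu_tilde"
  shows "lam mu_tilde f h = 0"
proof -
  have P: "prob_space mu_tilde" by (rule prob_mt)
  have fL: "f \<in> L2 mu_tilde" by (rule H2_L2[OF f])
  have hL: "h \<in> L2 mu_tilde" by (rule H2_L2[OF h])
  define Nf where "Nf = (\<integral>z. (cmod (f z))\<^sup>2 \<partial>mu_tilde)"
  have Nf: "Nf \<ge> 0" unfolding Nf_def by (rule integral_nonneg_AE) auto
  have "(cmod (lam mu_tilde f h))\<^sup>2 = 0"
  proof (rule small_zero[where C="4 * Nf"])
    show "0 \<le> 4 * Nf" using Nf by simp
    show "0 \<le> (cmod (lam mu_tilde f h))\<^sup>2" by simp
    fix e :: real assume e: "e > 0"
    obtain k where k: "k \<in> gen_span" and ke: "(\<integral>z. (cmod (h z - k z))\<^sup>2 \<partial>mu_tilde) < e"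
      using H2_approx[OF h e] by blast
    have kL: "k \<in> L2 mu_tilde" by (rule span_props(1)[OF k])
    have "lam mu_tilde k f = 0" using lam_span_zero[OF f k] by (simp add: lam_comm)
    then have "lam mu_tilde f h = lam mu_tilde (\<lambda>z. h z - k z) f"
      using lam_diff_left[OF P hL kL fL] by (simp add: lam_comm)
    then have "(cmod (lam mu_tilde f h))\<^sup>2 \<le> 4 * (\<integral>z. (cmod (h z - k z))\<^sup>2 \<partial>mu_tilde) * Nf"
      unfolding Nf_def using lam_bound[OF P L2_diff[OF hL kL] fL] by simp
    also have "\<dots> \<le> 4 * e * Nf" using ke Nf by (intro mult_right_mono) auto
    finally show "(cmod (lam mu_tilde f h))\<^sup>2 \<le> 4 * Nf * e" by (simp add: mult_ac)
  qed
  then show ?thesis by simp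
qed



theorem mainTheorem18:
  fixes f :: "complex \<Rightarrow> complex"
  assumes "f \<in> H2 mu_tilde"
  shows "is_orth_proj mu_tilde (H2 mu_tilde) (\<lambda>z. cnj (f z))
           (\<lambda>z. cnj (L2_inner mu_tilde f (\<lambda>_. 1)))"
proof -
  have P: "prob_space mu_tilde" by (rule prob_mt)
  have fL: "f \<in> L2 mu_tilde" by (rule H2_L2[OF assms])
  define I where "I = integral\<^sup>L mu_tilde f"
  have C: "cnj (L2_inner mu_tilde f (\<lambda>_. 1)) = cnj I"
    unfolding L2_inner_def I_def by simp
  have fm: "f \<in> borel_measurable mu_tilde" by (rule L2_meas[OF fL])
  have "(\<lambda>z. cnj (f z)) \<in> borel_measurable mu_tilde"
    using measurable_compose[OF fm borel_measurable_continuous_onI[OF continuous_on_cnj[OF continuous_on_id]]]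
    by (simp add: comp_def)
  then have part1: "(\<lambda>z. cnj (f z)) \<in> L2 mu_tilde"
    using fL unfolding L2_def by auto
  have part2: "(\<lambda>z. cnj I) \<in> H2 mu_tilde"
    unfolding H2_def
  proof (intro CollectI conjI allI impI)
    show "(\<lambda>z. cnj I) \<in> L2 mu_tilde" by (rule const_L2[OF P])
    fix e :: real assume e: "e > 0"
    let ?g = "\<lambda>z. \<Sum>i<(1::nat). (\<lambda>_. cnj I) i * gen_fun ((\<lambda>_. 1::real) i) z"
    have "?g \<in> gen_span" unfolding gen_span_def mem_Collect_eq
      by (rule exI[of _ 1], rule exI[of _ "\<lambda>_. cnj I"], rule exI[of _ "\<lambda>_. 1"]) simp
    moreover have "?g = (\<lambda>z. cnj I)" by (simp add: gen_fun_1)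
    ultimately have "(\<lambda>z. cnj I) \<in> gen_span" by simp
    moreover have "(\<integral>z. (cmod (cnj I - cnj I))\<^sup>2 \<partial>mu_tilde) < e" using e by simp
    ultimately show "\<exists>g\<in>gen_span. (\<integral>z. (cmod (cnj I - g z))\<^sup>2 \<partial>mu_tilde) < e"
      by (intro bexI[of _ "\<lambda>z. cnj I"]) simp_all
  qed
  have part3: "L2_inner mu_tilde (\<lambda>z. cnj (f z) - cnj I) h = 0" if h: "h \<in> H2 mu_tilde" for h
  proof -
    have hL: "h \<in> L2 mu_tilde" by (rule H2_L2[OF h])
    have i1: "integrable mu_tilde (\<lambda>z. f z * h z)" by (rule L2_mult_integrable[OF fL hL])
    have i2: "integrable mu_tilde (\<lambda>z. I * h z)" using L2_integrable[OF P hL] by simp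
    have "L2_inner mu_tilde (\<lambda>z. cnj (f z) - cnj I) h = (\<integral>z. cnj (f z * h z - I * h z) \<partial>mu_tilde)"
      unfolding L2_inner_def by (simp add: algebra_simps)
    also have "\<dots> = cnj (\<integral>z. f z * h z - I * h z \<partial>mu_tilde)"
      by (rule Bochner_Integration.integral_cnj)
    also have "(\<integral>z. f z * h z - I * h z \<partial>mu_tilde) = (\<integral>z. f z * h z \<partial>mu_tilde) - (\<integral>z. I * h z \<partial>mu_tilde)"
      by (rule Bochner_Integration.integral_diff[OF i1 i2])
    also have "(\<integral>z. I * h z \<partial>mu_tilde) = I * integral\<^sup>L mu_tilde h"
      by (rule integral_mult_right_zero)
    also have "(\<integral>z. f z * h z \<partial>mu_tilde) - I * integral\<^sup>L mu_tilde h = lam mu_tilde f h"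
      unfolding lam_def I_def ..
    also have "\<dots> = 0" by (rule lam_H2_zero[OF assms h])
    finally show ?thesis by simp
  qed
  show ?thesis
    unfolding is_orth_proj_def C using part1 part2 part3 by blast
qed


end
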